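(* Let $\gamma$ be an $n\times m$ integer matrix satisfying conditions (i) and (ii) for the sign $-$, and let $A=\mathcal{A}(\gamma)^-$. For $g\in\mathbb{Z}^m$ put $|g|=\sum_{i=1}^m|g_i|$. Then $A_g\neq0$ if and only if there is a sequence $(i_1,\dots,i_N)$ with $N=|g|$ of elements of $\{1,\dots,m\}$ in which each $i$ occurs exactly $|g_i|$ times (so that the vectors $\mathrm{sgn}(g_{i_k})\gamma(\mathbf{e}_{i_k})$, $k=1,\dots,N$, form an $n$-dimensional vector composition of $\gamma(g)$), such that for every $r\in\{p+1,\dots,n\}$ the sequence $\big(\mathrm{sgn}(g_{i_1})\gamma_{ri_1},\dots,\mathrm{sgn}(g_{i_N})\gamma_{ri_N}\big)$ contains no block of consecutive entries of the form $(1,0,\dots,0,1)$ or $(-1,0,\dots,0,-1)$ (with zero or more $0$'s in between).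
   Context: $\Bbbk$ is an algebraically closed field of characteristic $0$. Fix $p,q\ge0$, $n=p+q$; $p(i)=0$ for $i\le p$, $p(i)=1$ for $i>p$. With the sign $-$: $\lambda_{ij}=(-1)^{p(i)p(j)}$, so $\lambda_{jj}=-1$ exactly for $j>p$; $R=\Bbbk[u_1,\dots,u_n]/(u_j^2-u_j\mid j>p)$; $\tau_i\in\mathrm{Aut}(R)$ with $\tau_i(u_i)=\lambda_{ii}(u_i-1)$, $\tau_i(u_j)=u_j$ ($j\ne i$). TGW algebras: for a TGW datum $(R,\sigma,t)$ (commuting automorphisms $\sigma_i$, central $t_i$) and nonzero scalars $\mu_{ij}$ ($i\ne j$), $\mathcal{A}_\mu(R,\sigma,t)$ is the quotient of the $R$-ring generated by $X_i,Y_i$ with relations $X_ir=\sigma_i(r)X_i$, $Y_ir=\sigma_i^{-1}(r)Y_i$, $Y_iX_i=t_i$, $X_iY_i=\sigma_i(t_i)$, $X_iY_j=\mu_{ij}Y_jX_i$ ($i\ne j$), graded by $\deg X_i=\mathbf{e}_i=-\deg Y_i$, $\deg R=0$, by the largest graded ideal meeting the degree-zero part trivially. The family $\mathcal{A}(\gamma)^-$: $\gamma=(\gamma_{ji})$ is an $n\times m$ integer matrix with (i) $|\gamma_{ji}|\le1$ whenever $\lambda_{jj}=-1$, and (ii) for all $i\ne i'$, either $\gamma_{ki}\gamma_{ki'}<0$ for some $k$ with $\lambda_{kk}=-1$, or $\gamma_{ki}\gamma_{ki'}\le0$ for all $k$. Then $\mathcal{A}(\gamma)^-=\mathcal{A}_\mu(R,\sigma,t)$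 with index set $\{1,\dots,m\}$, $\sigma_i=\tau_1^{\gamma_{1i}}\cdots\tau_n^{\gamma_{ni}}$, $t_i=\prod_{j=1}^nu_{ji}$ with $u_{ji}=(u_j+\gamma_{ji}-1)\cdots(u_j+1)u_j$ if $\gamma_{ji}>0$, $1$ if $\gamma_{ji}=0$, $(u_j-|\gamma_{ji}|)\cdots(u_j-1)$ if $\gamma_{ji}<0$; and $\mu_{ij}=(-1)^{\bar p(i)\bar p(j)}$ with $\bar p(i)=\sum_k\gamma_{ki}p(k)\bmod2$. $\gamma(\mathbf{e}_i)$ denotes the $i$-th column of $\gamma$, and $\mathrm{sgn}$ is the sign function. *)

theory Defs
  imports "HOL-Computational_Algebra.Polynomial"
begin

definition alg_closed_type :: "'k::field itself \<Rightarrow> bool" where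
  "alg_closed_type _ \<longleftrightarrow> (\<forall>P::'k poly. 0 < degree P \<longrightarrow> (\<exists>x. poly P x = 0))"

text \<open>R is realised as the ring of polynomial functions on the affine variety
  V = k^p x {0,1}^q (points v :: nat => k, coordinates 1..n, zero elsewhere);
  the ideal (u_j^2 - u_j | j>p) is radical with zero set V, so this is R.\<close>

definition Vset :: "nat \<Rightarrow> nat \<Rightarrow> (nat \<Rightarrow> 'k::field) set" where
  "Vset p n = {v. (\<forall>j. (j = 0 \<or> n < j) \<longrightarrow> v j = 0) \<and>
                  (\<forall>j. p < j \<and> j \<le> n \<longrightarrow> v j = 0 \<or> v j = 1)}"

inductive_set Pfun :: "nat \<Rightarrow> ((nat \<Rightarrow> 'k::field) \<Rightarrow> 'k) set" for n where
  const: "(\<lambda>v. c) \<in> Pfun n"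
| coord: "1 \<le> j \<Longrightarrow> j \<le> n \<Longrightarrow> (\<lambda>v. v j) \<in> Pfun n"
| add: "f \<in> Pfun n \<Longrightarrow> g \<in> Pfun n \<Longrightarrow> (\<lambda>v. f v + g v) \<in> Pfun n"
| mul: "f \<in> Pfun n \<Longrightarrow> g \<in> Pfun n \<Longrightarrow> (\<lambda>v. f v * g v) \<in> Pfun n"

definition onV :: "nat \<Rightarrow> nat \<Rightarrow> ((nat \<Rightarrow> 'k::field) \<Rightarrow> 'k) \<Rightarrow> ((nat \<Rightarrow> 'k) \<Rightarrow> 'k)" where
  "onV p n f = (\<lambda>v. if v \<in> Vset p n then f v else 0)"

definition Rset :: "nat \<Rightarrow> nat \<Rightarrow> ((nat \<Rightarrow> 'k::field) \<Rightarrow> 'k) set" where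
  "Rset p n = onV p n ` Pfun n"

definition uu :: "nat \<Rightarrow> nat \<Rightarrow> nat \<Rightarrow> ((nat \<Rightarrow> 'k::field) \<Rightarrow> 'k)" where
  "uu p n j = onV p n (\<lambda>v. v j)"

definition lam :: "nat \<Rightarrow> nat \<Rightarrow> 'k::field" where
  "lam p j = (if j \<le> p then 1 else -1)"

text \<open>tau_j: the automorphism with tau_j(u_j) = lambda_jj (u_j - 1), tau_j(u_k) = u_k;
  on polynomial functions it is precomposition with the corresponding map of V.\<close>
definition tau :: "nat \<Rightarrow> nat \<Rightarrow> nat \<Rightarrow> ((nat \<Rightarrow> 'k::field) \<Rightarrow> 'k) \<Rightarrow> ((nat \<Rightarrow> 'k) \<Rightarrow> 'k)" where
  "tau p n j f = onV p n (\<lambda>v. f (v(j := lam p j * (v j - 1))))"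

definition tau_inv :: "nat \<Rightarrow> nat \<Rightarrow> nat \<Rightarrow> ((nat \<Rightarrow> 'k::field) \<Rightarrow> 'k) \<Rightarrow> ((nat \<Rightarrow> 'k) \<Rightarrow> 'k)" where
  "tau_inv p n j = the_inv_into (Rset p n) (tau p n j)"

definition tau_pow :: "nat \<Rightarrow> nat \<Rightarrow> nat \<Rightarrow> int \<Rightarrow> ((nat \<Rightarrow> 'k::field) \<Rightarrow> 'k) \<Rightarrow> ((nat \<Rightarrow> 'k) \<Rightarrow> 'k)" where
  "tau_pow p n j k = (if 0 \<le> k then tau p n j ^^ nat k else tau_inv p n j ^^ nat (- k))"

definition sig :: "nat \<Rightarrow> nat \<Rightarrow> (nat \<Rightarrow> nat \<Rightarrow> int) \<Rightarrow> nat \<Rightarrow> ((nat \<Rightarrow> 'k::field) \<Rightarrow> 'k) \<Rightarrow> ((nat \<Rightarrow> 'k) \<Rightarrow> 'k)" where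
  "sig p n \<gamma> i = foldr (\<lambda>j acc. tau_pow p n j (\<gamma> j i) \<circ> acc) [1..<Suc n] id"

definition sig_inv :: "nat \<Rightarrow> nat \<Rightarrow> (nat \<Rightarrow> nat \<Rightarrow> int) \<Rightarrow> nat \<Rightarrow> ((nat \<Rightarrow> 'k::field) \<Rightarrow> 'k) \<Rightarrow> ((nat \<Rightarrow> 'k) \<Rightarrow> 'k)" where
  "sig_inv p n \<gamma> i = the_inv_into (Rset p n) (sig p n \<gamma> i)"

text \<open>u_{ji} as a polynomial in one variable evaluated at x, and t_i = prod_j u_{ji}.\<close>
definition ufac :: "int \<Rightarrow> 'k::field \<Rightarrow> 'k" where
  "ufac c x = (if 0 < c then (\<Prod>k<nat c. x + of_nat k)
               else if c < 0 then (\<Prod>k\<in>{1..nat (- c)}. x - of_nat k) else 1)"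

definition tt :: "nat \<Rightarrow> nat \<Rightarrow> (nat \<Rightarrow> nat \<Rightarrow> int) \<Rightarrow> nat \<Rightarrow> ((nat \<Rightarrow> 'k::field) \<Rightarrow> 'k)" where
  "tt p n \<gamma> i = onV p n (\<lambda>v. \<Prod>j\<in>{1..n}. ufac (\<gamma> j i) (v j))"

definition pbar :: "nat \<Rightarrow> nat \<Rightarrow> (nat \<Rightarrow> nat \<Rightarrow> int) \<Rightarrow> nat \<Rightarrow> int" where
  "pbar p n \<gamma> i = (\<Sum>k\<in>{p<..n}. \<gamma> k i) mod 2"

definition mu :: "nat \<Rightarrow> nat \<Rightarrow> (nat \<Rightarrow> nat \<Rightarrow> int) \<Rightarrow> nat \<Rightarrow> nat \<Rightarrow> 'k::field" where
  "mu p n \<gamma> i j = (-1) ^ nat (pbar p n \<gamma> i * pbar p n \<gamma> j)"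

text \<open>Letters: (True,i) is X_i, (False,i) is Y_i. An element of the R-ring freely
  generated by the X_i, Y_i subject only to X_i r = sigma_i(r) X_i, Y_i r = sigma_i^{-1}(r) Y_i
  is a finite R-linear combination r_w w of words w (R on the left).\<close>

type_synonym letter = "bool \<times> nat"
type_synonym 'k elt = "letter list \<Rightarrow> ((nat \<Rightarrow> 'k) \<Rightarrow> 'k)"

definition sig_letter :: "nat \<Rightarrow> nat \<Rightarrow> (nat \<Rightarrow> nat \<Rightarrow> int) \<Rightarrow> letter \<Rightarrow> ((nat \<Rightarrow> 'k::field) \<Rightarrow> 'k) \<Rightarrow> ((nat \<Rightarrow> 'k) \<Rightarrow> 'k)" where
  "sig_letter p n \<gamma> l = (if fst l then sig p n \<gamma> (snd l) else sig_inv p n \<gamma> (snd l))"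

definition sig_word :: "nat \<Rightarrow> nat \<Rightarrow> (nat \<Rightarrow> nat \<Rightarrow> int) \<Rightarrow> letter list \<Rightarrow> ((nat \<Rightarrow> 'k::field) \<Rightarrow> 'k) \<Rightarrow> ((nat \<Rightarrow> 'k) \<Rightarrow> 'k)" where
  "sig_word p n \<gamma> w = foldr (\<lambda>l acc. sig_letter p n \<gamma> l \<circ> acc) w id"

definition Fset :: "nat \<Rightarrow> nat \<Rightarrow> nat \<Rightarrow> 'k::field elt set" where
  "Fset p n m = {c. finite {w. c w \<noteq> (\<lambda>v. 0)} \<and> (\<forall>w. c w \<in> Rset p n) \<and>
                    (\<forall>w. c w \<noteq> (\<lambda>v. 0) \<longrightarrow> (\<forall>l\<in>set w. snd l \<in> {1..m}))}"

definition Fadd :: "'k::field elt \<Rightarrow> 'k elt \<Rightarrow> 'k elt" where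
  "Fadd a b = (\<lambda>w v. a w v + b w v)"

definition Fmul :: "nat \<Rightarrow> nat \<Rightarrow> (nat \<Rightarrow> nat \<Rightarrow> int) \<Rightarrow> 'k::field elt \<Rightarrow> 'k elt \<Rightarrow> 'k elt" where
  "Fmul p n \<gamma> a b = (\<lambda>w v. \<Sum>k\<in>{0..length w}.
       a (take k w) v * sig_word p n \<gamma> (take k w) (b (drop k w)) v)"

definition Fzero :: "'k::field elt" where
  "Fzero = (\<lambda>w v. 0)"

definition wdeg :: "letter list \<Rightarrow> nat \<Rightarrow> int" where
  "wdeg w = (\<lambda>i. int (length (filter (\<lambda>l. l = (True, i)) w)) - int (length (filter (\<lambda>l. l = (False, i)) w)))"

definition Fhom :: "nat \<Rightarrow> nat \<Rightarrow> nat \<Rightarrow> (nat \<Rightarrow> int) \<Rightarrow> 'k::field elt set" where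
  "Fhom p n m g = {c \<in> Fset p n m. \<forall>w. c w \<noteq> (\<lambda>v. 0) \<longrightarrow> wdeg w = g}"

definition hcomp :: "(nat \<Rightarrow> int) \<Rightarrow> 'k::field elt \<Rightarrow> 'k elt" where
  "hcomp g c = (\<lambda>w. if wdeg w = g then c w else (\<lambda>v. 0))"

definition oneR :: "nat \<Rightarrow> nat \<Rightarrow> (nat \<Rightarrow> 'k::field) \<Rightarrow> 'k" where
  "oneR p n = onV p n (\<lambda>v. 1)"

definition rels :: "nat \<Rightarrow> nat \<Rightarrow> nat \<Rightarrow> (nat \<Rightarrow> nat \<Rightarrow> int) \<Rightarrow> 'k::field elt set" where
  "rels p n m \<gamma> =
     {(\<lambda>w. if w = [(False, i), (True, i)] then oneR p n
           else if w = [] then (\<lambda>v. - tt p n \<gamma> i v) else (\<lambda>v. 0)) | i. i \<in> {1..m}}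
   \<union> {(\<lambda>w. if w = [(True, i), (False, i)] then oneR p n
           else if w = [] then (\<lambda>v. - sig p n \<gamma> i (tt p n \<gamma> i) v) else (\<lambda>v. 0)) | i. i \<in> {1..m}}
   \<union> {(\<lambda>w. if w = [(True, i), (False, j)] then oneR p n
           else if w = [(False, j), (True, i)] then (\<lambda>v. - mu p n \<gamma> i j * oneR p n v)
           else (\<lambda>v. 0)) | i j. i \<in> {1..m} \<and> j \<in> {1..m} \<and> i \<noteq> j}"

inductive_set Jgen :: "nat \<Rightarrow> nat \<Rightarrow> nat \<Rightarrow> (nat \<Rightarrow> nat \<Rightarrow> int) \<Rightarrow> 'k::field elt set"
  for p n m \<gamma> where
  rel: "r \<in> rels p n m \<gamma> \<Longrightarrow> r \<in> Jgen p n m \<gamma>"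
| zero: "Fzero \<in> Jgen p n m \<gamma>"
| add: "a \<in> Jgen p n m \<gamma> \<Longrightarrow> b \<in> Jgen p n m \<gamma> \<Longrightarrow> Fadd a b \<in> Jgen p n m \<gamma>"
| lmul: "c \<in> Fset p n m \<Longrightarrow> a \<in> Jgen p n m \<gamma> \<Longrightarrow> Fmul p n \<gamma> c a \<in> Jgen p n m \<gamma>"
| rmul: "c \<in> Fset p n m \<Longrightarrow> a \<in> Jgen p n m \<gamma> \<Longrightarrow> Fmul p n \<gamma> a c \<in> Jgen p n m \<gamma>"

definition graded_ideal :: "nat \<Rightarrow> nat \<Rightarrow> nat \<Rightarrow> (nat \<Rightarrow> nat \<Rightarrow> int) \<Rightarrow> 'k::field elt set \<Rightarrow> bool" where
  "graded_ideal p n m \<gamma> K \<longleftrightarrow> K \<subseteq> Fset p n m \<and> Fzero \<in> K \<and>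
     (\<forall>a\<in>K. \<forall>b\<in>K. Fadd a b \<in> K) \<and>
     (\<forall>c\<in>Fset p n m. \<forall>a\<in>K. Fmul p n \<gamma> c a \<in> K \<and> Fmul p n \<gamma> a c \<in> K) \<and>
     (\<forall>a\<in>K. \<forall>g. hcomp g a \<in> K)"

text \<open>Graded ideals of the presented R-ring C = F/J meeting C_0 trivially correspond to
  graded ideals K of F with J \<subseteq> K and K \<inter> F_0 \<subseteq> J. The largest one is their union.\<close>
definition admissible :: "nat \<Rightarrow> nat \<Rightarrow> nat \<Rightarrow> (nat \<Rightarrow> nat \<Rightarrow> int) \<Rightarrow> 'k::field elt set \<Rightarrow> bool" where
  "admissible p n m \<gamma> K \<longleftrightarrow> graded_ideal p n m \<gamma> K \<and> Jgen p n m \<gamma> \<subseteq> K \<and>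
     K \<inter> Fhom p n m (\<lambda>i. 0) \<subseteq> Jgen p n m \<gamma>"

definition Imax :: "nat \<Rightarrow> nat \<Rightarrow> nat \<Rightarrow> (nat \<Rightarrow> nat \<Rightarrow> int) \<Rightarrow> 'k::field elt set" where
  "Imax p n m \<gamma> = \<Union>{K. admissible p n m \<gamma> K}"

text \<open>A_g \<noteq> 0 for A = A(gamma)^- over the field 'k: the degree g component of F is not
  contained in the ideal whose quotient is A.\<close>
definition A_comp_nonzero :: "'k::field itself \<Rightarrow> nat \<Rightarrow> nat \<Rightarrow> nat \<Rightarrow> (nat \<Rightarrow> nat \<Rightarrow> int) \<Rightarrow> (nat \<Rightarrow> int) \<Rightarrow> bool" where
  "A_comp_nonzero _ p n m \<gamma> g \<longleftrightarrow> \<not> ((Fhom p n m g :: 'k elt set) \<subseteq> Imax p n m \<gamma>)"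

definition gamma_cond_minus :: "nat \<Rightarrow> nat \<Rightarrow> nat \<Rightarrow> (nat \<Rightarrow> nat \<Rightarrow> int) \<Rightarrow> bool" where
  "gamma_cond_minus p n m \<gamma> \<longleftrightarrow>
     (\<forall>j\<in>{p<..n}. \<forall>i\<in>{1..m}. \<bar>\<gamma> j i\<bar> \<le> 1) \<and>
     (\<forall>i\<in>{1..m}. \<forall>i'\<in>{1..m}. i \<noteq> i' \<longrightarrow>
        (\<exists>k\<in>{p<..n}. \<gamma> k i * \<gamma> k i' < 0) \<or> (\<forall>k\<in>{1..n}. \<gamma> k i * \<gamma> k i' \<le> 0))"

definition no_bad_block :: "int list \<Rightarrow> bool" where
  "no_bad_block a \<longleftrightarrow> \<not> (\<exists>k l. k < l \<and> l < length a \<and> a ! k = a ! l \<and> (a ! k = 1 \<or> a ! k = -1) \<and>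
                              (\<forall>j. k < j \<and> j < l \<longrightarrow> a ! j = 0))"

end

theory Submission
  imports Defs
begin


definition shiftc :: "nat \<Rightarrow> nat \<Rightarrow> int \<Rightarrow> 'k::field \<Rightarrow> 'k" where
  "shiftc p j c x = (if j \<le> p then x - of_int c else if even c then x else 1 - x)"

definition mvP :: "nat \<Rightarrow> nat \<Rightarrow> (nat \<Rightarrow> int) \<Rightarrow> (nat \<Rightarrow> 'k::field) \<Rightarrow> (nat \<Rightarrow> 'k)" where
  "mvP p n col v = (\<lambda>j. if 1 \<le> j \<and> j \<le> n then shiftc p j (col j) (v j) else v j)"

definition pc :: "nat \<Rightarrow> nat \<Rightarrow> (nat \<Rightarrow> int) \<Rightarrow> ((nat \<Rightarrow> 'k::field) \<Rightarrow> 'k) \<Rightarrow> ((nat \<Rightarrow> 'k) \<Rightarrow> 'k)" where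
  "pc p n col r = onV p n (\<lambda>v. r (mvP p n col v))"

lemma shiftc_add: "shiftc p j a (shiftc p j b x) = shiftc p j (b + a) (x::'k::field)"
  by (auto simp: shiftc_def algebra_simps)

lemma shiftc_0[simp]: "shiftc p j 0 x = x"
  by (simp add: shiftc_def)

lemma mvP_add: "mvP p n a (mvP p n b v) = mvP p n (\<lambda>j. b j + a j) v"
  by (auto simp: mvP_def shiftc_add)

lemma mvP_0[simp]: "mvP p n (\<lambda>j. 0) v = v"
  by (auto simp: mvP_def)

lemma mvP_cong: "(\<And>j. 1 \<le> j \<Longrightarrow> j \<le> n \<Longrightarrow> a j = b j) \<Longrightarrow> mvP p n a v = mvP p n b v"
  by (auto simp: mvP_def)

lemma mvP_inv1[simp]: "mvP p n a (mvP p n (\<lambda>j. - a j) v) = v"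
  by (simp add: mvP_add)
lemma mvP_inv2[simp]: "mvP p n (\<lambda>j. - a j) (mvP p n a v) = v"
  by (simp add: mvP_add)

lemma mvP_comm: "mvP p n a (mvP p n b v) = mvP p n b (mvP p n a v)"
  by (simp add: mvP_add add.commute)

lemma onV_in[simp]: "v \<in> Vset p n \<Longrightarrow> onV p n f v = f v"
  by (simp add: onV_def)
lemma onV_out[simp]: "v \<notin> Vset p n \<Longrightarrow> onV p n f v = 0"
  by (simp add: onV_def)

lemma mvP_V: "v \<in> Vset p n \<Longrightarrow> mvP p n col v \<in> Vset p n"
  by (auto simp: Vset_def mvP_def shiftc_def)

lemma mvP_V_iff: "mvP p n col v \<in> Vset p n \<longleftrightarrow> v \<in> Vset p n"
  using mvP_V[of "mvP p n col v" p n "\<lambda>j. - col j"] mvP_V[of v p n col] by auto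

lemma Rset_out: "r \<in> Rset p n \<Longrightarrow> v \<notin> Vset p n \<Longrightarrow> r v = 0"
  by (auto simp: Rset_def)

lemma Rset_onV: "r \<in> Rset p n \<Longrightarrow> onV p n r = r"
  by (auto simp: Rset_def onV_def)

lemma Rset_eqI: "r \<in> Rset p n \<Longrightarrow> s \<in> Rset p n \<Longrightarrow> (\<And>v. v \<in> Vset p n \<Longrightarrow> r v = s v) \<Longrightarrow> r = s"
  by (rule ext) (metis Rset_out)

lemma Rset_I: "f \<in> Pfun n \<Longrightarrow> onV p n f \<in> Rset p n"
  by (simp add: Rset_def)

lemma Rset_add: "r \<in> Rset p n \<Longrightarrow> s \<in> Rset p n \<Longrightarrow> (\<lambda>v. r v + s v) \<in> Rset p n"
proof -
  assume "r \<in> Rset p n" "s \<in> Rset p n"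
  then obtain f g where f: "f \<in> Pfun n" "r = onV p n f" and g: "g \<in> Pfun n" "s = onV p n g"
    by (auto simp: Rset_def)
  have "(\<lambda>v. r v + s v) = onV p n (\<lambda>v. f v + g v)" using f g by (auto simp: onV_def)
  then show ?thesis using f g by (simp add: Rset_I Pfun.add)
qed

lemma Rset_mul: "r \<in> Rset p n \<Longrightarrow> s \<in> Rset p n \<Longrightarrow> (\<lambda>v. r v * s v) \<in> Rset p n"
proof -
  assume "r \<in> Rset p n" "s \<in> Rset p n"
  then obtain f g where f: "f \<in> Pfun n" "r = onV p n f" and g: "g \<in> Pfun n" "s = onV p n g"
    by (auto simp: Rset_def)
  have "(\<lambda>v. r v * s v) = onV p n (\<lambda>v. f v * g v)" using f g by (auto simp: onV_def)
  then show ?thesis using f g by (simp add: Rset_I Pfun.mul)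
qed

lemma Rset_const: "(\<lambda>v. c * oneR p n v) \<in> Rset p n"
proof -
  have "(\<lambda>v. c * oneR p n v) = onV p n (\<lambda>v. c)" by (auto simp: oneR_def onV_def)
  then show ?thesis by (simp add: Rset_I Pfun.const)
qed

lemma Rset_oneR: "oneR p n \<in> Rset p n"
  using Rset_const[of 1 p n] by simp

lemma Rset_zero: "(\<lambda>v. 0) \<in> Rset p n"
  using Rset_const[of 0 p n] by simp

lemma Rset_smul: "r \<in> Rset p n \<Longrightarrow> (\<lambda>v. c * r v) \<in> Rset p n"
proof -
  assume r: "r \<in> Rset p n"
  have "(\<lambda>v. c * r v) = (\<lambda>v. (c * oneR p n v) * r v)"
  proof (rule ext)
    fix v show "c * r v = (c * oneR p n v) * r v"
      using r by (cases "v \<in> Vset p n") (auto simp: oneR_def Rset_out)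
  qed
  then show ?thesis using Rset_mul[OF Rset_const r] by simp
qed

lemma Rset_neg: "r \<in> Rset p n \<Longrightarrow> (\<lambda>v. - r v) \<in> Rset p n"
  using Rset_smul[of r p n "-1"] by simp

lemma Rset_mul_oneR: "r \<in> Rset p n \<Longrightarrow> r v * oneR p n v = r v"
  by (cases "v \<in> Vset p n") (auto simp: oneR_def Rset_out)
lemma Rset_oneR_mul: "r \<in> Rset p n \<Longrightarrow> oneR p n v * r v = r v"
  by (cases "v \<in> Vset p n") (auto simp: oneR_def Rset_out)

lemma Pfun_shift: "1 \<le> j \<Longrightarrow> j \<le> n \<Longrightarrow> (\<lambda>v. shiftc p j c (v j)) \<in> Pfun n"
proof -
  assume j: "1 \<le> j" "j \<le> n"
  have cj: "(\<lambda>v. v j) \<in> Pfun n" using j by (rule Pfun.coord)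
  show ?thesis
  proof (cases "j \<le> p")
    case True
    have "(\<lambda>v. v j + (- of_int c)) \<in> Pfun n" by (rule Pfun.add[OF cj Pfun.const])
    then show ?thesis using True by (simp add: shiftc_def)
  next
    case False
    have "(\<lambda>v. 1 + (-1) * v j) \<in> Pfun n" by (rule Pfun.add[OF Pfun.const Pfun.mul[OF Pfun.const cj]])
    then show ?thesis using False cj by (cases "even c") (simp_all add: shiftc_def)
  qed
qed

lemma Pfun_mvP: "f \<in> Pfun n \<Longrightarrow> (\<lambda>v. f (mvP p n col v)) \<in> Pfun n"
proof (induction rule: Pfun.induct)
  case (const c) then show ?case by (simp add: Pfun.const)
next
  case (coord j) then show ?case by (simp add: mvP_def Pfun_shift)
next
  case (add f g) then show ?case by (simp add: Pfun.add)
next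
  case (mul f g) then show ?case by (simp add: Pfun.mul)
qed

lemma pc_Rset: "r \<in> Rset p n \<Longrightarrow> pc p n col r \<in> Rset p n"
proof -
  assume "r \<in> Rset p n"
  then obtain f where f: "f \<in> Pfun n" "r = onV p n f" by (auto simp: Rset_def)
  have "pc p n col r = onV p n (\<lambda>v. f (mvP p n col v))"
    using f by (auto simp: pc_def onV_def mvP_V_iff)
  then show ?thesis using f Pfun_mvP Rset_I by metis
qed

lemma pc_in: "v \<in> Vset p n \<Longrightarrow> pc p n col r v = r (mvP p n col v)"
  by (simp add: pc_def)

lemma pc_pc: "r \<in> Rset p n \<Longrightarrow> pc p n a (pc p n b r) = pc p n (\<lambda>j. a j + b j) r"
  by (auto simp: pc_def onV_def mvP_V_iff mvP_add add.commute intro!: ext)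

lemma pc_0: "r \<in> Rset p n \<Longrightarrow> pc p n (\<lambda>j. 0) r = r"
  by (auto simp: pc_def Rset_onV)

lemma pc_cong: "(\<And>j. 1 \<le> j \<Longrightarrow> j \<le> n \<Longrightarrow> a j = b j) \<Longrightarrow> pc p n a r = pc p n b r"
  by (simp add: pc_def mvP_cong[of n a b])

lemma pc_inj: "inj_on (pc p n col) (Rset p n :: ((nat \<Rightarrow> 'k::field) \<Rightarrow> 'k) set)"
proof (rule inj_onI)
  fix r s :: "(nat \<Rightarrow> 'k) \<Rightarrow> 'k" assume r: "r \<in> Rset p n" and s: "s \<in> Rset p n" and e: "pc p n col r = pc p n col s"
  show "r = s"
  proof (rule Rset_eqI[OF r s])
    fix v :: "nat \<Rightarrow> 'k" assume v: "v \<in> Vset p n"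
    let ?u = "mvP p n (\<lambda>j. - col j) v"
    have u: "?u \<in> Vset p n" using v by (simp add: mvP_V)
    have "pc p n col r ?u = pc p n col s ?u" using e by simp
    then show "r v = s v" using u by (simp add: pc_in)
  qed
qed

lemma pc_inv: "r \<in> Rset p n \<Longrightarrow> the_inv_into (Rset p n) (pc p n col) r = pc p n (\<lambda>j. - col j) r"
  by (rule the_inv_into_f_eq[OF pc_inj]) (simp_all add: pc_pc pc_0 pc_Rset)

lemma pc_add: "r \<in> Rset p n \<Longrightarrow> s \<in> Rset p n \<Longrightarrow> pc p n col (\<lambda>v. r v + s v) = (\<lambda>v. pc p n col r v + pc p n col s v)"
  by (auto simp: pc_def onV_def)
lemma pc_mul: "pc p n col (\<lambda>v. r v * s v) = (\<lambda>v. pc p n col r v * pc p n col s v)"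
  by (auto simp: pc_def onV_def)
lemma pc_smul: "pc p n col (\<lambda>v. c * r v) = (\<lambda>v. c * pc p n col r v)"
  by (auto simp: pc_def onV_def)
lemma pc_neg: "pc p n col (\<lambda>v. - r v) = (\<lambda>v. - pc p n col r v)"
  by (auto simp: pc_def onV_def)
lemma pc_oneR: "pc p n col (oneR p n) = oneR p n"
  by (auto simp: pc_def onV_def oneR_def mvP_V_iff)
lemma pc_zero: "pc p n col (\<lambda>v. 0) = (\<lambda>v. 0)"
  by (auto simp: pc_def onV_def)

definition delta :: "nat \<Rightarrow> int \<Rightarrow> nat \<Rightarrow> int" where
  "delta j k = (\<lambda>l. if l = j then k else 0)"

lemma tau_pc: "1 \<le> j \<Longrightarrow> j \<le> n \<Longrightarrow> tau p n j f = pc p n (delta j 1) (f::(nat \<Rightarrow> 'k::field) \<Rightarrow> 'k)"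
proof -
  assume j: "1 \<le> j" "j \<le> n"
  have "\<And>v. v(j := lam p j * (v j - 1)) = mvP p n (delta j 1) (v::nat \<Rightarrow> 'k)"
    using j by (auto simp: mvP_def delta_def shiftc_def lam_def intro!: ext)
  then show ?thesis by (simp add: tau_def pc_def)
qed

lemma tau_inv_pc: "1 \<le> j \<Longrightarrow> j \<le> n \<Longrightarrow> r \<in> Rset p n \<Longrightarrow>
   tau_inv p n j r = pc p n (delta j (-1)) (r::(nat \<Rightarrow> 'k::field) \<Rightarrow> 'k)"
proof -
  assume j: "1 \<le> j" "j \<le> n" and r: "r \<in> Rset p n"
  have "tau_inv p n j r = the_inv_into (Rset p n) (pc p n (delta j 1)) r"
    unfolding tau_inv_def using tau_pc[OF j] by (metis)
  also have "\<dots> = pc p n (\<lambda>l. - delta j 1 l) r" by (rule pc_inv[OF r])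
  also have "(\<lambda>l. - delta j 1 l) = delta j (-1)" by (auto simp: delta_def)
  finally show ?thesis .
qed

lemma tau_pow_pc: "1 \<le> j \<Longrightarrow> j \<le> n \<Longrightarrow> r \<in> Rset p n \<Longrightarrow>
   tau_pow p n j k r = pc p n (delta j k) (r::(nat \<Rightarrow> 'k::field) \<Rightarrow> 'k)"
proof -
  assume j: "1 \<le> j" "j \<le> n" and r: "r \<in> Rset p n"
  have pos: "(tau p n j ^^ c) r = pc p n (delta j (int c)) r" for c
  proof (induction c)
    case 0 then show ?case using r by (simp add: delta_def pc_0 cong: if_cong)
  next
    case (Suc c)
    have "(tau p n j ^^ Suc c) r = pc p n (delta j 1) (pc p n (delta j (int c)) r)"
      using Suc tau_pc[OF j] by simp
    also have "\<dots> = pc p n (delta j (int (Suc c))) r"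
      using r by (simp add: pc_pc delta_def if_distrib cong: if_cong)
    finally show ?case .
  qed
  have neg: "(tau_inv p n j ^^ c) r = pc p n (delta j (- int c)) r" for c
  proof (induction c)
    case 0 then show ?case using r by (simp add: delta_def pc_0 cong: if_cong)
  next
    case (Suc c)
    have "(tau_inv p n j ^^ Suc c) r = tau_inv p n j (pc p n (delta j (- int c)) r)"
      using Suc by simp
    also have "\<dots> = pc p n (delta j (-1)) (pc p n (delta j (- int c)) r)"
      by (rule tau_inv_pc[OF j pc_Rset[OF r]])
    also have "\<dots> = pc p n (delta j (- int (Suc c))) r"
      using r by (simp add: pc_pc delta_def if_distrib cong: if_cong)
    finally show ?case .
  qed
  show ?thesis
  proof (cases "0 \<le> k")
    case True then show ?thesis using pos[of "nat k"] by (simp add: tau_pow_def)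
  next
    case False then show ?thesis using neg[of "nat (-k)"] by (simp add: tau_pow_def)
  qed
qed

definition gcol :: "(nat \<Rightarrow> nat \<Rightarrow> int) \<Rightarrow> nat \<Rightarrow> nat \<Rightarrow> int" where
  "gcol \<gamma> i = (\<lambda>j. \<gamma> j i)"

lemma sig_foldr: "set L \<subseteq> {1..n} \<Longrightarrow> distinct L \<Longrightarrow> r \<in> Rset p n \<Longrightarrow>
  foldr (\<lambda>j acc. tau_pow p n j (\<gamma> j i) \<circ> acc) L id r
   = pc p n (\<lambda>j. if j \<in> set L then \<gamma> j i else 0) (r::(nat \<Rightarrow> 'k::field) \<Rightarrow> 'k)"
proof (induction L)
  case Nil then show ?case by (simp add: pc_0)
next
  case (Cons j L)
  have j: "1 \<le> j" "j \<le> n" using Cons.prems by auto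
  have IH: "foldr (\<lambda>j acc. tau_pow p n j (\<gamma> j i) \<circ> acc) L id r
     = pc p n (\<lambda>j. if j \<in> set L then \<gamma> j i else 0) r"
    by (rule Cons.IH) (use Cons.prems in auto)
  have "foldr (\<lambda>j acc. tau_pow p n j (\<gamma> j i) \<circ> acc) (j # L) id r
     = tau_pow p n j (\<gamma> j i) (pc p n (\<lambda>j. if j \<in> set L then \<gamma> j i else 0) r)"
    using IH by simp
  also have "\<dots> = pc p n (delta j (\<gamma> j i)) (pc p n (\<lambda>j. if j \<in> set L then \<gamma> j i else 0) r)"
    by (rule tau_pow_pc[OF j pc_Rset[OF Cons.prems(3)]])
  also have "\<dots> = pc p n (\<lambda>l. if l \<in> set (j # L) then \<gamma> l i else 0) r"
    using Cons.prems by (auto simp: pc_pc delta_def intro!: pc_cong)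
  finally show ?case .
qed

lemma sig_pc: "r \<in> Rset p n \<Longrightarrow> sig p n \<gamma> i r = pc p n (gcol \<gamma> i) (r::(nat \<Rightarrow> 'k::field) \<Rightarrow> 'k)"
  unfolding sig_def
  by (subst sig_foldr) (auto simp: gcol_def intro!: pc_cong)

lemma sig_Rset_eq: "Rset p n \<inter> {r. sig p n \<gamma> i r = pc p n (gcol \<gamma> i) r} = (Rset p n :: ((nat \<Rightarrow> 'k::field) \<Rightarrow> 'k) set)"
  using sig_pc by blast

lemma sig_inj: "inj_on (sig p n \<gamma> i) (Rset p n :: ((nat \<Rightarrow> 'k::field) \<Rightarrow> 'k) set)"
  using pc_inj[of p n "gcol \<gamma> i"] by (simp add: inj_on_def sig_pc)

lemma sig_inv_pc: "r \<in> Rset p n \<Longrightarrow> sig_inv p n \<gamma> i r = pc p n (\<lambda>j. - gcol \<gamma> i j) (r::(nat \<Rightarrow> 'k::field) \<Rightarrow> 'k)"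
  unfolding sig_inv_def
  by (rule the_inv_into_f_eq[OF sig_inj]) (simp_all add: sig_pc pc_pc pc_0 pc_Rset)

definition lcol :: "(nat \<Rightarrow> nat \<Rightarrow> int) \<Rightarrow> letter \<Rightarrow> nat \<Rightarrow> int" where
  "lcol \<gamma> l = (if fst l then gcol \<gamma> (snd l) else (\<lambda>j. - gcol \<gamma> (snd l) j))"

fun wcol :: "(nat \<Rightarrow> nat \<Rightarrow> int) \<Rightarrow> letter list \<Rightarrow> nat \<Rightarrow> int" where
  "wcol \<gamma> [] = (\<lambda>j. 0)"
| "wcol \<gamma> (l # w) = (\<lambda>j. lcol \<gamma> l j + wcol \<gamma> w j)"

lemma wcol_append: "wcol \<gamma> (u @ v) = (\<lambda>j. wcol \<gamma> u j + wcol \<gamma> v j)"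
  by (induction u) (auto simp: algebra_simps)

lemma sig_letter_pc: "r \<in> Rset p n \<Longrightarrow> sig_letter p n \<gamma> l r = pc p n (lcol \<gamma> l) (r::(nat \<Rightarrow> 'k::field) \<Rightarrow> 'k)"
  by (simp add: sig_letter_def lcol_def sig_pc sig_inv_pc)

lemma sig_word_pc: "r \<in> Rset p n \<Longrightarrow> sig_word p n \<gamma> w r = pc p n (wcol \<gamma> w) (r::(nat \<Rightarrow> 'k::field) \<Rightarrow> 'k)"
proof (induction w)
  case Nil then show ?case by (simp add: sig_word_def pc_0)
next
  case (Cons l w)
  have "sig_word p n \<gamma> (l # w) r = sig_letter p n \<gamma> l (sig_word p n \<gamma> w r)"
    by (simp add: sig_word_def)
  also have "\<dots> = pc p n (lcol \<gamma> l) (pc p n (wcol \<gamma> w) r)"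
    using Cons by (simp add: sig_letter_pc pc_Rset)
  also have "\<dots> = pc p n (wcol \<gamma> (l # w)) r" using Cons.prems by (simp add: pc_pc)
  finally show ?case .
qed

lemma sig_word_Rset: "r \<in> Rset p n \<Longrightarrow> sig_word p n \<gamma> w r \<in> Rset p n"
  by (simp add: sig_word_pc pc_Rset)


definition sgnp :: "int \<Rightarrow> 'k::field" where
  "sgnp z = (if even z then 1 else -1)"

lemma sgnp_add: "sgnp (a + b) = (sgnp a * sgnp b :: 'k::field)"
  by (auto simp: sgnp_def)
lemma sgnp_diff: "sgnp (a - b) = (sgnp a * sgnp b :: 'k::field)"
  by (auto simp: sgnp_def)
lemma sgnp_sq[simp]: "sgnp a * sgnp a = (1 :: 'k::field)"
  by (auto simp: sgnp_def)
lemma sgnp_nz[simp]: "sgnp a \<noteq> (0 :: 'k::field)"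
  by (auto simp: sgnp_def)

definition supp :: "'k::field elt \<Rightarrow> letter list set" where
  "supp c = {w. c w \<noteq> (\<lambda>v. 0)}"

lemma wdeg_Nil[simp]: "wdeg [] = (\<lambda>i. 0)"
  by (simp add: wdeg_def)

definition ldeg :: "letter \<Rightarrow> nat \<Rightarrow> int" where
  "ldeg l = (\<lambda>j. if j = snd l then (if fst l then 1 else -1) else 0)"

lemma wdeg_Cons: "wdeg (l # u) = (\<lambda>j. ldeg l j + wdeg u j)"
  by (cases l) (auto simp: wdeg_def ldeg_def intro!: ext)

lemma wdeg_append: "wdeg (u @ v) = (\<lambda>j. wdeg u j + wdeg v j)"
  by (auto simp: wdeg_def intro!: ext)

locale rep =
  fixes p n m :: nat and \<gamma> :: "nat \<Rightarrow> nat \<Rightarrow> int"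
  assumes pn: "p \<le> n" and gc: "gamma_cond_minus p n m \<gamma>"
begin

abbreviation V where "V \<equiv> Vset p n"

definition eps :: "nat \<Rightarrow> (nat \<Rightarrow> int) \<Rightarrow> 'k::field" where
  "eps i h = sgnp (pbar p n \<gamma> i * (\<Sum>l\<in>{1..<i}. pbar p n \<gamma> l * h l))"

definition aco :: "nat \<Rightarrow> int \<Rightarrow> 'k::field \<Rightarrow> 'k" where
  "aco j c x = (if j \<le> p then (if c < 0 then pochhammer x (nat (- c)) else 1)
                else (if c = 1 then 1 - x else if c = -1 then - x else 1))"

definition bco :: "nat \<Rightarrow> int \<Rightarrow> 'k::field \<Rightarrow> 'k" where
  "bco j c x = (if j \<le> p then (if 0 < c then pochhammer x (nat c) else 1)
                else (if c = 1 then x else if c = -1 then 1 - x else 1))"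

definition co :: "letter \<Rightarrow> nat \<Rightarrow> 'k::field \<Rightarrow> 'k" where
  "co l j x = (if fst l then aco j (\<gamma> j (snd l)) x else bco j (\<gamma> j (snd l)) x)"

definition wt :: "letter \<Rightarrow> (nat \<Rightarrow> 'k::field) \<Rightarrow> (nat \<Rightarrow> int) \<Rightarrow> 'k" where
  "wt l y h = (if y \<in> V then eps (snd l) h * (\<Prod>j\<in>{1..n}. co l j (y j)) else 0)"

definition mv :: "letter \<Rightarrow> (nat \<Rightarrow> 'k::field) \<Rightarrow> (nat \<Rightarrow> 'k)" where
  "mv l y = mvP p n (lcol \<gamma> l) y"

fun Wt :: "letter list \<Rightarrow> (nat \<Rightarrow> 'k::field) \<Rightarrow> (nat \<Rightarrow> int) \<Rightarrow> 'k" where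
  "Wt [] y h = 1"
| "Wt (l # u) y h = wt l y h * Wt u (mv l y) (\<lambda>j. h j - ldeg l j)"

definition Mv :: "letter list \<Rightarrow> (nat \<Rightarrow> 'k::field) \<Rightarrow> (nat \<Rightarrow> 'k)" where
  "Mv w y = mvP p n (wcol \<gamma> w) y"

definition Phiw :: "letter list \<Rightarrow> ((nat \<Rightarrow> 'k::field) \<Rightarrow> (nat \<Rightarrow> int) \<Rightarrow> 'k)
     \<Rightarrow> (nat \<Rightarrow> 'k) \<Rightarrow> (nat \<Rightarrow> int) \<Rightarrow> 'k" where
  "Phiw w f y h = Wt w y h * f (Mv w y) (\<lambda>j. h j - wdeg w j)"

definition Phi :: "'k::field elt \<Rightarrow> ((nat \<Rightarrow> 'k) \<Rightarrow> (nat \<Rightarrow> int) \<Rightarrow> 'k)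
     \<Rightarrow> (nat \<Rightarrow> 'k) \<Rightarrow> (nat \<Rightarrow> int) \<Rightarrow> 'k" where
  "Phi c f y h = (\<Sum>w\<in>supp c. c w y * Phiw w f y h)"

lemma Mv_Nil[simp]: "Mv [] y = y"
  by (simp add: Mv_def)

lemma Mv_Cons: "Mv (l # u) y = Mv u (mv l y)"
  by (simp add: Mv_def mv_def mvP_add)

lemma Mv_append: "Mv (u @ v) y = Mv v (Mv u y)"
  by (simp add: Mv_def mvP_add wcol_append)

lemma Wt_append: "Wt (u @ v) y h = Wt u y h * Wt v (Mv u y) (\<lambda>j. h j - wdeg u j)"
proof (induction u arbitrary: y h)
  case Nil then show ?case by simp
next
  case (Cons l u)
  show ?case by (simp add: Cons Mv_Cons wdeg_Cons algebra_simps)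
qed

lemma Phiw_Nil[simp]: "Phiw [] f y h = f y h"
  by (simp add: Phiw_def)

lemma Phiw_append: "Phiw (u @ v) f y h = Phiw u (Phiw v f) y h"
  by (simp add: Phiw_def Wt_append Mv_append wdeg_append algebra_simps)

lemma Wt_V: "Wt u y h \<noteq> 0 \<Longrightarrow> u \<noteq> [] \<Longrightarrow> y \<in> V"
  by (cases u) (auto simp: wt_def split: if_splits)

lemma Wt_comm: "r \<in> Rset p n \<Longrightarrow>
   sig_word p n \<gamma> u r y * Wt u y h = r (Mv u y) * Wt u y h"
proof (cases "Wt u y h = 0")
  case False
  assume r: "r \<in> Rset p n"
  show ?thesis
  proof (cases "u = []")
    case True then show ?thesis using r by (simp add: sig_word_def)
  next
    case ne: False
    have "y \<in> V" using Wt_V[OF False ne] .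
    then show ?thesis using r by (simp add: sig_word_pc pc_in Mv_def)
  qed
qed simp

lemma Phi_superset: "finite S \<Longrightarrow> supp c \<subseteq> S \<Longrightarrow> Phi c f y h = (\<Sum>w\<in>S. c w y * Phiw w f y h)"
  unfolding Phi_def
  by (rule sum.mono_neutral_left) (auto simp: supp_def)

lemma Fset_finite: "c \<in> Fset p n m \<Longrightarrow> finite (supp c)"
  by (simp add: Fset_def supp_def)

lemma Phi_add: "a \<in> Fset p n m \<Longrightarrow> b \<in> Fset p n m \<Longrightarrow>
   Phi (Fadd a b) f y h = Phi a f y h + Phi b f y h"
proof -
  assume a: "a \<in> Fset p n m" and b: "b \<in> Fset p n m"
  let ?S = "supp a \<union> supp b"
  have fin: "finite ?S" using a b by (simp add: Fset_finite)
  have s: "supp (Fadd a b) \<subseteq> ?S" by (auto simp: supp_def Fadd_def)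
  show ?thesis
    using Phi_superset[OF fin s] Phi_superset[OF fin, of a] Phi_superset[OF fin, of b]
    by (simp add: Fadd_def sum.distrib algebra_simps)
qed

lemma sig_word_zero: "sig_word p n \<gamma> u (\<lambda>v. 0) = (\<lambda>v. 0 :: 'k::field)"
  by (simp add: sig_word_pc Rset_zero pc_zero)

lemma sum_split_reindex:
  "(\<Sum>wk\<in>Sigma S (\<lambda>w. {0..length w}). F (take (snd wk) (fst wk), drop (snd wk) (fst wk)))
   = (\<Sum>uv\<in>{(u, v). u @ v \<in> S}. F uv)"
  by (rule sum.reindex_bij_witness[where i = "\<lambda>(u, v). (u @ v, length u)"
          and j = "\<lambda>(w, k). (take k w, drop k w)"]) auto

lemma finite_split_set: "finite S \<Longrightarrow> finite {(u, v). u @ v \<in> S}"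
proof -
  assume fin: "finite S"
  have "{(u, v). u @ v \<in> S} \<subseteq> (\<lambda>(w, k). (take k w, drop k w)) ` Sigma S (\<lambda>w. {0..length w})"
  proof
    fix x assume "x \<in> {(u, v). u @ v \<in> S}"
    then obtain u v where x: "x = (u, v)" "u @ v \<in> S" by auto
    then show "x \<in> (\<lambda>(w, k). (take k w, drop k w)) ` Sigma S (\<lambda>w. {0..length w})"
      by (intro image_eqI[where x = "(u @ v, length u)"]) auto
  qed
  moreover have "finite (Sigma S (\<lambda>w. {0..length w}))" using fin by auto
  ultimately show ?thesis by (meson finite_imageI finite_subset)
qed

lemma supp_Fmul: "b \<in> Fset p n m \<Longrightarrow>
   supp (Fmul p n \<gamma> a b) \<subseteq> (\<lambda>(u, v). u @ v) ` (supp a \<times> supp b)"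
proof
  fix w assume b: "b \<in> Fset p n m" and "w \<in> supp (Fmul p n \<gamma> a b)"
  then obtain v where "(\<Sum>k\<in>{0..length w}. a (take k w) v * sig_word p n \<gamma> (take k w) (b (drop k w)) v) \<noteq> 0"
    by (auto simp: supp_def Fmul_def)
  then obtain k where "a (take k w) v * sig_word p n \<gamma> (take k w) (b (drop k w)) v \<noteq> 0"
    using sum.not_neutral_contains_not_neutral by blast
  then have "take k w \<in> supp a" "drop k w \<in> supp b"
    by (auto simp: supp_def sig_word_zero)
  then show "w \<in> (\<lambda>(u, v). u @ v) ` (supp a \<times> supp b)"
    by (metis (no_types, lifting) append_take_drop_id image_eqI mem_Sigma_iff case_prod_conv)
qed

lemma Phi_mul: "a \<in> Fset p n m \<Longrightarrow> b \<in> Fset p n m \<Longrightarrow>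
   Phi (Fmul p n \<gamma> a b) f y h = Phi a (Phi b f) y h"
proof -
  assume a: "a \<in> Fset p n m" and b: "b \<in> Fset p n m"
  let ?Sa = "supp a" and ?Sb = "supp b"
  let ?S = "(\<lambda>(u, v). u @ v) ` (?Sa \<times> ?Sb)"
  have fa: "finite ?Sa" and fb: "finite ?Sb" using a b by (simp_all add: Fset_finite)
  have fin: "finite ?S" using fa fb by simp
  have bR: "b v \<in> Rset p n" for v using b by (simp add: Fset_def)
  have s: "supp (Fmul p n \<gamma> a b) \<subseteq> ?S"
  proof
    fix w assume "w \<in> supp (Fmul p n \<gamma> a b)"
    then obtain v where "(\<Sum>k\<in>{0..length w}. a (take k w) v * sig_word p n \<gamma> (take k w) (b (drop k w)) v) \<noteq> 0"
      by (auto simp: supp_def Fmul_def)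
    then obtain k where "a (take k w) v * sig_word p n \<gamma> (take k w) (b (drop k w)) v \<noteq> 0"
      using sum.not_neutral_contains_not_neutral by blast
    then have "take k w \<in> ?Sa" "drop k w \<in> ?Sb"
      by (auto simp: supp_def sig_word_zero)
    then show "w \<in> ?S" by (metis (no_types, lifting) append_take_drop_id image_eqI mem_Sigma_iff case_prod_conv)
  qed
  define F where "F = (\<lambda>(u, v). a u y * sig_word p n \<gamma> u (b v) y * Phiw (u @ v) f y h)"
  let ?P = "{(u, v). u @ v \<in> ?S}"
  let ?Sig = "Sigma ?S (\<lambda>w. {0..length w})"
  have "Phi (Fmul p n \<gamma> a b) f y h = (\<Sum>w\<in>?S. Fmul p n \<gamma> a b w y * Phiw w f y h)"
    by (rule Phi_superset[OF fin s])
  also have "\<dots> = (\<Sum>w\<in>?S. \<Sum>k\<in>{0..length w}. F (take k w, drop k w))"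
    by (simp add: Fmul_def F_def sum_distrib_right)
  also have "\<dots> = (\<Sum>wk\<in>?Sig. F (take (snd wk) (fst wk), drop (snd wk) (fst wk)))"
    by (subst sum.Sigma) (use fin in \<open>auto simp: split_def\<close>)
  also have "\<dots> = (\<Sum>uv\<in>?P. F uv)"
    by (rule sum_split_reindex)
  also have "\<dots> = (\<Sum>uv\<in>?Sa \<times> ?Sb. F uv)"
  proof (rule sum.mono_neutral_right)
    show "finite ?P" using fin by (rule finite_split_set)
    show "?Sa \<times> ?Sb \<subseteq> ?P" by auto
    show "\<forall>uv\<in>?P - ?Sa \<times> ?Sb. F uv = 0"
      by (auto simp: F_def supp_def sig_word_zero)
  qed
  also have "\<dots> = (\<Sum>u\<in>?Sa. \<Sum>v\<in>?Sb. F (u, v))"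
    by (simp add: sum.cartesian_product split_def)
  also have "\<dots> = (\<Sum>u\<in>?Sa. a u y * Phiw u (Phi b f) y h)"
  proof (rule sum.cong[OF refl])
    fix u assume "u \<in> ?Sa"
    have "(\<Sum>v\<in>?Sb. F (u, v)) = (\<Sum>v\<in>?Sb. a u y * (b v (Mv u y) * Wt u y h) *
          Phiw v f (Mv u y) (\<lambda>j. h j - wdeg u j))"
    proof (rule sum.cong[OF refl])
      fix v assume "v \<in> ?Sb"
      have "F (u, v) = a u y * (sig_word p n \<gamma> u (b v) y * Wt u y h) * Phiw v f (Mv u y) (\<lambda>j. h j - wdeg u j)"
        by (simp add: F_def Phiw_append Phiw_def[of u])
      also have "\<dots> = a u y * (b v (Mv u y) * Wt u y h) * Phiw v f (Mv u y) (\<lambda>j. h j - wdeg u j)"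
        by (simp add: Wt_comm[OF bR])
      finally show "F (u, v) = \<dots>" .
    qed
    also have "\<dots> = a u y * Phiw u (Phi b f) y h"
      by (simp add: Phiw_def[of u] Phi_def sum_distrib_left sum_distrib_right algebra_simps)
    finally show "(\<Sum>v\<in>?Sb. F (u, v)) = a u y * Phiw u (Phi b f) y h" .
  qed
  also have "\<dots> = Phi a (Phi b f) y h" by (simp add: Phi_def)
  finally show ?thesis .
qed

end


lemma ufac_pos: "0 < c \<Longrightarrow> ufac c x = pochhammer x (nat c)"
  by (simp add: ufac_def pochhammer_prod atLeast0LessThan)

lemma ufac_neg: "c < 0 \<Longrightarrow> ufac c (x::'k::field) = pochhammer (x + of_int c) (nat (- c))"
proof -
  assume c: "c < 0"
  define C where "C = nat (- c)"
  have cC: "of_int c = - (of_nat C :: 'k)" using c by (simp add: C_def)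
  have "ufac c x = (\<Prod>k\<in>{1..C}. x - of_nat k)" using c by (simp add: ufac_def C_def)
  also have "\<dots> = (\<Prod>i\<in>{0..<C}. x - of_nat C + of_nat i)"
    by (rule prod.reindex_bij_witness[where i = "\<lambda>i. C - i" and j = "\<lambda>k. C - k"])
       (auto simp: of_nat_diff)
  also have "\<dots> = pochhammer (x + of_int c) C" by (simp add: pochhammer_prod cC)
  finally show ?thesis by (simp add: C_def)
qed

lemma ufac_0[simp]: "ufac 0 x = 1" by (simp add: ufac_def)

context rep begin

lemma odd_V: "y \<in> V \<Longrightarrow> p < k \<Longrightarrow> k \<le> n \<Longrightarrow> y k = 0 \<or> y k = 1"
  by (auto simp: Vset_def)

lemma gam_bound: "p < k \<Longrightarrow> k \<le> n \<Longrightarrow> i \<in> {1..m} \<Longrightarrow> \<gamma> k i = 0 \<or> \<gamma> k i = 1 \<or> \<gamma> k i = -1"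
proof -
  assume a: "p < k" "k \<le> n" "i \<in> {1..m}"
  then have "\<bar>\<gamma> k i\<bar> \<le> 1" using gc by (auto simp: gamma_cond_minus_def)
  then show ?thesis by linarith
qed

lemma co_YX:
  assumes x: "p < k \<Longrightarrow> x = 0 \<or> x = 1" and c: "p < k \<Longrightarrow> c = 0 \<or> c = 1 \<or> c = -1"
  shows "bco k c x * aco k c (shiftc p k (- c) x) = ufac c (x::'k::field_char_0)"
proof (cases "k \<le> p")
  case True
  show ?thesis
  proof (cases "0 < c")
    case True then show ?thesis using \<open>k \<le> p\<close> by (simp add: aco_def bco_def ufac_pos)
  next
    case False
    show ?thesis
    proof (cases "c = 0")
      case True then show ?thesis by (simp add: aco_def bco_def)
    next
      case False
      then have "c < 0" using \<open>\<not> 0 < c\<close> by simp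
      then show ?thesis using \<open>k \<le> p\<close> by (simp add: aco_def bco_def ufac_neg shiftc_def)
    qed
  qed
next
  case False
  then have x: "x = 0 \<or> x = 1" and c: "c = 0 \<or> c = 1 \<or> c = -1" using x c by auto
  then show ?thesis using False by (auto simp: aco_def bco_def shiftc_def ufac_def)
qed

lemma co_cross:
  assumes x: "p < k \<Longrightarrow> x = 0 \<or> x = 1" and c: "p < k \<Longrightarrow> c = 0 \<or> c = 1 \<or> c = -1"
    and d: "p < k \<Longrightarrow> d = 0 \<or> d = 1 \<or> d = -1" and cd: "c * d \<le> 0"
  shows "aco k c x * bco k d (shiftc p k c x) = bco k d x * aco k c (shiftc p k (- d) (x::'k::field_char_0))"
proof (cases "c = 0 \<or> d = 0")
  case True then show ?thesis by (auto simp: aco_def bco_def)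
next
  case False
  then have cd': "(0 < c \<and> d < 0) \<or> (c < 0 \<and> 0 < d)" using cd
    by (metis linorder_neqE_linordered_idom mult_neg_neg mult_pos_pos not_le)
  show ?thesis
  proof (cases "k \<le> p")
    case True
    show ?thesis
    proof (cases "0 < c")
      case True then show ?thesis using cd' \<open>k \<le> p\<close> by (auto simp: aco_def bco_def)
    next
      case False
      then have c': "c < 0" "0 < d" using cd' by auto
      define C where "C = nat (- c)"
      define D where "D = nat d"
      have cC: "x - of_int c = x + of_nat C" using c' by (simp add: C_def)
      have dD: "x - of_int (- d) = x + of_nat D" using c' by (simp add: D_def)
      have dD2: "(of_int d :: 'k) = of_nat D" using c' by (simp add: D_def)
      have "pochhammer x C * pochhammer (x + of_nat C) D = pochhammer x D * pochhammer (x + of_nat D) C"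
        by (metis pochhammer_product' add.commute)
      then show ?thesis using c' \<open>k \<le> p\<close>
        by (simp add: aco_def bco_def shiftc_def cC dD dD2 flip: C_def D_def)
    qed
  next
    case False
    then have "c = 1 \<or> c = -1" "d = 1 \<or> d = -1" using c d \<open>\<not> (c = 0 \<or> d = 0)\<close> by auto
    then show ?thesis using False cd' by (auto simp: aco_def bco_def shiftc_def algebra_simps)
  qed
qed

lemma co_kill:
  assumes k: "p < k" and x: "x = 0 \<or> x = 1" and c: "c = 0 \<or> c = 1 \<or> c = -1"
    and d: "d = 0 \<or> d = 1 \<or> d = -1" and cd: "c * d < 0"
  shows "aco k c x * bco k d (shiftc p k c x) = 0" "bco k d x * aco k c (shiftc p k (- d) (x::'k::field_char_0)) = 0"
proof -
  have "(c = 1 \<and> d = -1) \<or> (c = -1 \<and> d = 1)" using c d cd by auto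
  then show "aco k c x * bco k d (shiftc p k c x) = 0" "bco k d x * aco k c (shiftc p k (- d) x) = 0"
    using k x by (auto simp: aco_def bco_def shiftc_def)
qed


lemma mv_coord: "1 \<le> j \<Longrightarrow> j \<le> n \<Longrightarrow> mv l y j = shiftc p j (lcol \<gamma> l j) (y j)"
  by (simp add: mv_def mvP_def)

lemma mv_V: "y \<in> V \<Longrightarrow> mv l y \<in> V"
  by (simp add: mv_def mvP_V)

lemma lcol_X[simp]: "lcol \<gamma> (True, i) j = \<gamma> j i" by (simp add: lcol_def gcol_def)
lemma lcol_Y[simp]: "lcol \<gamma> (False, i) j = - \<gamma> j i" by (simp add: lcol_def gcol_def)

lemma pbar_01: "pbar p n \<gamma> i = 0 \<or> pbar p n \<gamma> i = 1"
  by (auto simp: pbar_def)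

lemma sgnp_neg: "sgnp (- a) = (sgnp a :: 'k::field)"
  by (simp add: sgnp_def)

lemma sgnp_0[simp]: "sgnp 0 = 1" by (simp add: sgnp_def)

lemma eps_shift: "eps j (\<lambda>l. h l - ldeg (b, i) l) =
   (eps j h * (if 1 \<le> i \<and> i < j then sgnp (pbar p n \<gamma> j * pbar p n \<gamma> i) else 1) :: 'k::field)"
proof -
  have "(\<Sum>l\<in>{1..<j}. pbar p n \<gamma> l * (h l - ldeg (b, i) l))
      = (\<Sum>l\<in>{1..<j}. pbar p n \<gamma> l * h l) - (\<Sum>l\<in>{1..<j}. pbar p n \<gamma> l * ldeg (b, i) l)"
    by (simp add: algebra_simps sum_subtractf)
  moreover have "(\<Sum>l\<in>{1..<j}. pbar p n \<gamma> l * ldeg (b, i) l)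
      = (if 1 \<le> i \<and> i < j then (if b then 1 else -1) * pbar p n \<gamma> i else 0)"
    by (auto simp: ldeg_def if_distrib sum.delta cong: if_cong)
  ultimately show ?thesis
    by (auto simp: eps_def right_diff_distrib sgnp_diff sgnp_neg)
qed

lemma eps_sq[simp]: "eps i h * eps i h = (1::'k::field)"
  by (simp add: eps_def)

lemma mu_sgnp: "mu p n \<gamma> i j = (sgnp (pbar p n \<gamma> i * pbar p n \<gamma> j) :: 'k::field)"
  using pbar_01[of i] pbar_01[of j] by (auto simp: mu_def sgnp_def)

lemma Wt2: "Wt [l1, l2] y h = wt l1 y h * wt l2 (mv l1 y) (\<lambda>j. h j - ldeg l1 j)"
  by simp

lemma wt_in: "y \<in> V \<Longrightarrow> wt l y h = eps (snd l) h * (\<Prod>j\<in>{1..n}. co l j (y j))"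
  by (simp add: wt_def)

lemma tt_in: "y \<in> V \<Longrightarrow> tt p n \<gamma> i y = (\<Prod>j\<in>{1..n}. ufac (\<gamma> j i) (y j))"
  by (simp add: tt_def)

lemma Wt_YX: "i \<in> {1..m} \<Longrightarrow> y \<in> V \<Longrightarrow> Wt [(False, i), (True, i)] y h = (tt p n \<gamma> i y :: 'k::field_char_0)"
proof -
  assume i: "i \<in> {1..m}" and y: "y \<in> V"
  have my: "mv (False, i) y \<in> V" using y by (rule mv_V)
  have "Wt [(False, i), (True, i)] y h = (eps i h * eps i h) *
      ((\<Prod>j\<in>{1..n}. bco j (\<gamma> j i) (y j)) * (\<Prod>j\<in>{1..n}. aco j (\<gamma> j i) (mv (False, i) y j)))"
    using y my by (simp add: Wt2 wt_in eps_shift co_def)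
  also have "\<dots> = (\<Prod>j\<in>{1..n}. bco j (\<gamma> j i) (y j) * aco j (\<gamma> j i) (shiftc p j (- \<gamma> j i) (y j)))"
    by (simp add: prod.distrib mv_coord)
  also have "\<dots> = (\<Prod>j\<in>{1..n}. ufac (\<gamma> j i) (y j))"
    by (rule prod.cong[OF refl], rule co_YX) (use y i odd_V gam_bound in auto)
  finally show ?thesis using y by (simp add: tt_in)
qed

lemma tt_Rset: "tt p n \<gamma> i \<in> (Rset p n :: ((nat \<Rightarrow> 'k::field) \<Rightarrow> 'k) set)"
proof -
  have u: "(\<lambda>v::nat \<Rightarrow> 'k. ufac c (v j)) \<in> Pfun n" if j: "1 \<le> j" "j \<le> n" for c j
  proof -
    have cj: "(\<lambda>v::nat \<Rightarrow> 'k. v j) \<in> Pfun n" using j by (rule Pfun.coord)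
    have pr: "(\<lambda>v::nat \<Rightarrow> 'k. \<Prod>k\<in>K. f k (v j)) \<in> Pfun n" if "finite K" "\<And>k. (\<lambda>v. f k (v j)) \<in> Pfun n" for K f
      using that by (induction K rule: finite_induct) (auto intro: Pfun.const Pfun.mul)
    have a1: "(\<lambda>v::nat \<Rightarrow> 'k. v j + of_nat k) \<in> Pfun n" for k using cj by (intro Pfun.add Pfun.const)
    have a2: "(\<lambda>v::nat \<Rightarrow> 'k. v j - of_nat k) \<in> Pfun n" for k
      using Pfun.add[OF cj Pfun.const[of "- of_nat k"]] by simp
    have b1: "(\<lambda>v::nat \<Rightarrow> 'k. \<Prod>k<nat c. v j + of_nat k) \<in> Pfun n"
      using pr[of "{..<nat c}" "\<lambda>k x. x + of_nat k"] a1 by auto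
    have b2: "(\<lambda>v::nat \<Rightarrow> 'k. \<Prod>k\<in>{1..nat (-c)}. v j - of_nat k) \<in> Pfun n"
      using pr[of "{1..nat (-c)}" "\<lambda>k x. x - of_nat k"] a2 by auto
    show ?thesis
      unfolding ufac_def
      by (cases "0 < c"; cases "c < 0") (use b1 b2 Pfun.const in auto)
  qed
  have "(\<lambda>v::nat \<Rightarrow> 'k. \<Prod>j\<in>J. ufac (\<gamma> j i) (v j)) \<in> Pfun n" if "J \<subseteq> {1..n}" for J
  proof -
    have "finite J" using that finite_subset by blast
    then show ?thesis using that
    proof (induction J rule: finite_induct)
      case empty then show ?case by (simp add: Pfun.const)
    next
      case (insert x F)
      have "(\<lambda>v::nat \<Rightarrow> 'k. ufac (\<gamma> x i) (v x) * (\<Prod>j\<in>F. ufac (\<gamma> j i) (v j))) \<in> Pfun n"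
        by (rule Pfun.mul[OF u]) (use insert in auto)
      then show ?case using insert by simp
    qed
  qed
  then show ?thesis unfolding tt_def by (simp add: Rset_I)
qed

lemma Wt_XY: "i \<in> {1..m} \<Longrightarrow> y \<in> V \<Longrightarrow>
   Wt [(True, i), (False, i)] y h = (sig p n \<gamma> i (tt p n \<gamma> i) y :: 'k::field_char_0)"
proof -
  assume i: "i \<in> {1..m}" and y: "y \<in> V"
  have my: "mv (True, i) y \<in> V" using y by (rule mv_V)
  have "Wt [(True, i), (False, i)] y h = (eps i h * eps i h) *
      ((\<Prod>j\<in>{1..n}. aco j (\<gamma> j i) (y j)) * (\<Prod>j\<in>{1..n}. bco j (\<gamma> j i) (mv (True, i) y j)))"
    using y my by (simp add: Wt2 wt_in eps_shift co_def)
  also have "\<dots> = (\<Prod>j\<in>{1..n}. bco j (\<gamma> j i) (mv (True, i) y j) *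
         aco j (\<gamma> j i) (shiftc p j (- \<gamma> j i) (mv (True, i) y j)))"
    by (auto simp: prod.distrib mv_coord shiftc_add mult.commute intro!: prod.cong)
  also have "\<dots> = (\<Prod>j\<in>{1..n}. ufac (\<gamma> j i) (mv (True, i) y j))"
    by (rule prod.cong[OF refl], rule co_YX) (use my i odd_V gam_bound in auto)
  also have "\<dots> = tt p n \<gamma> i (mv (True, i) y)" using my by (simp add: tt_in)
  finally show ?thesis using y by (simp add: sig_pc tt_Rset pc_in mv_def lcol_def)
qed

lemma Wt_cross: "i \<in> {1..m} \<Longrightarrow> j \<in> {1..m} \<Longrightarrow> i \<noteq> j \<Longrightarrow> y \<in> V \<Longrightarrow>
   Wt [(True, i), (False, j)] y h = (mu p n \<gamma> i j * Wt [(False, j), (True, i)] y h :: 'k::field_char_0)"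
proof -
  assume i: "i \<in> {1..m}" and j: "j \<in> {1..m}" and ij: "i \<noteq> j" and y: "y \<in> V"
  have m1: "mv (True, i) y \<in> V" and m2: "mv (False, j) y \<in> V" using y by (simp_all add: mv_V)
  let ?L = "\<Prod>k\<in>{1..n}. aco k (\<gamma> k i) (y k) * bco k (\<gamma> k j) (shiftc p k (\<gamma> k i) (y k))"
  let ?R = "\<Prod>k\<in>{1..n}. bco k (\<gamma> k j) (y k) * aco k (\<gamma> k i) (shiftc p k (- \<gamma> k j) (y k))"
  have L: "Wt [(True, i), (False, j)] y h = eps i h * eps j h *
      (if 1 \<le> i \<and> i < j then sgnp (pbar p n \<gamma> j * pbar p n \<gamma> i) else 1) * ?L"
    using y m1 by (simp add: Wt2 wt_in eps_shift co_def prod.distrib mv_coord algebra_simps)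
  have R: "Wt [(False, j), (True, i)] y h = eps j h * eps i h *
      (if 1 \<le> j \<and> j < i then sgnp (pbar p n \<gamma> i * pbar p n \<gamma> j) else 1) * ?R"
    using y m2 by (simp add: Wt2 wt_in eps_shift co_def prod.distrib mv_coord algebra_simps)
  have LR: "?L = ?R"
  proof (cases "\<exists>k\<in>{p<..n}. \<gamma> k i * \<gamma> k j < 0")
    case True
    then obtain k where k: "k \<in> {p<..n}" "\<gamma> k i * \<gamma> k j < 0" by blast
    have k1: "k \<in> {1..n}" using k by auto
    have x: "y k = 0 \<or> y k = 1" using k y odd_V by auto
    have kp: "p < k" "k \<le> n" using k by auto
    have z1: "aco k (\<gamma> k i) (y k) * bco k (\<gamma> k j) (shiftc p k (\<gamma> k i) (y k)) = 0"
      by (rule co_kill(1)[OF kp(1) x gam_bound[OF kp i] gam_bound[OF kp j] k(2)])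
    have z2: "bco k (\<gamma> k j) (y k) * aco k (\<gamma> k i) (shiftc p k (- \<gamma> k j) (y k)) = 0"
      by (rule co_kill(2)[OF kp(1) x gam_bound[OF kp i] gam_bound[OF kp j] k(2)])
    have L0: "?L = 0" using k1 z1 by (intro prod_zero) blast+
    have R0: "?R = 0" using k1 z2 by (intro prod_zero) blast+
    show ?thesis by (simp only: L0 R0)
  next
    case False
    have "(\<exists>k\<in>{p<..n}. \<gamma> k i * \<gamma> k j < 0) \<or> (\<forall>k\<in>{1..n}. \<gamma> k i * \<gamma> k j \<le> 0)"
      using gc i j ij unfolding gamma_cond_minus_def by blast
    then have all: "\<forall>k\<in>{1..n}. \<gamma> k i * \<gamma> k j \<le> 0" using False by blast
    show ?thesis
      by (rule prod.cong[OF refl], rule co_cross) (use all y i j odd_V gam_bound in auto)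
  qed
  show ?thesis
  proof (cases "i < j")
    case True
    then show ?thesis using L R LR i j by (simp add: mu_sgnp mult.commute)
  next
    case False
    then have "j < i" using ij by simp
    then show ?thesis using L R LR i j
      by (simp add: mu_sgnp algebra_simps)
  qed
qed

end


definition sm :: "((nat \<Rightarrow> 'k::field) \<Rightarrow> 'k) \<Rightarrow> letter list \<Rightarrow> 'k elt" where
  "sm r w = (\<lambda>w'. if w' = w then r else (\<lambda>v. 0))"

definition valid :: "nat \<Rightarrow> letter list \<Rightarrow> bool" where
  "valid m w \<longleftrightarrow> (\<forall>l\<in>set w. snd l \<in> {1..m})"

lemma Rset_sum: "finite K \<Longrightarrow> (\<And>k. k \<in> K \<Longrightarrow> f k \<in> Rset p n) \<Longrightarrow> (\<lambda>v. \<Sum>k\<in>K. f k v) \<in> Rset p n"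
proof (induction K rule: finite_induct)
  case empty then show ?case by (simp add: Rset_zero)
next
  case (insert x F)
  then show ?case using Rset_add[of "f x" p n "\<lambda>v. \<Sum>k\<in>F. f k v"] by simp
qed

context rep begin

abbreviation mono :: "letter list \<Rightarrow> 'k::field elt" where
  "mono w \<equiv> sm (oneR p n) w"

lemma supp_sm: "supp (sm r w) \<subseteq> {w}"
  by (auto simp: supp_def sm_def)

lemma sm_Fset: "r \<in> Rset p n \<Longrightarrow> valid m w \<Longrightarrow> sm r w \<in> Fset p n m"
  by (auto simp: Fset_def sm_def valid_def Rset_zero finite_subset[OF _ finite.insertI[OF finite.emptyI]])

lemma mono_Fset: "valid m w \<Longrightarrow> mono w \<in> Fset p n m"
  by (simp add: sm_Fset Rset_oneR)

lemma Fzero_Fset: "Fzero \<in> Fset p n m"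
  by (simp add: Fset_def Fzero_def Rset_zero)

lemma Fadd_Fset: "a \<in> Fset p n m \<Longrightarrow> b \<in> Fset p n m \<Longrightarrow> Fadd a b \<in> Fset p n m"
proof -
  assume a: "a \<in> Fset p n m" and b: "b \<in> Fset p n m"
  have "supp (Fadd a b) \<subseteq> supp a \<union> supp b" by (auto simp: supp_def Fadd_def)
  then have "finite (supp (Fadd a b))" using a b by (meson Fset_finite finite_Un finite_subset)
  moreover have "Fadd a b w \<in> Rset p n" for w using a b by (simp add: Fadd_def Fset_def Rset_add)
  moreover have "Fadd a b w \<noteq> (\<lambda>v. 0) \<Longrightarrow> l \<in> set w \<Longrightarrow> snd l \<in> {1..m}" for w l
  proof -
    assume "Fadd a b w \<noteq> (\<lambda>v. 0)" "l \<in> set w"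
    then have "a w \<noteq> (\<lambda>v. 0) \<or> b w \<noteq> (\<lambda>v. 0)" by (auto simp: Fadd_def)
    then show ?thesis using a b \<open>l \<in> set w\<close> by (auto simp: Fset_def)
  qed
  ultimately show ?thesis by (auto simp: Fset_def supp_def)
qed

lemma Fmul_Fset: "a \<in> Fset p n m \<Longrightarrow> b \<in> Fset p n m \<Longrightarrow> Fmul p n \<gamma> a b \<in> Fset p n m"
proof -
  assume a: "a \<in> Fset p n m" and b: "b \<in> Fset p n m"
  have s: "supp (Fmul p n \<gamma> a b) \<subseteq> (\<lambda>(u, v). u @ v) ` (supp a \<times> supp b)" by (rule supp_Fmul[OF b])
  have "finite (supp (Fmul p n \<gamma> a b))"
    using a b s by (meson Fset_finite finite_SigmaI finite_imageI finite_subset)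
  moreover have "Fmul p n \<gamma> a b w \<in> Rset p n" for w
    unfolding Fmul_def
    using a b by (intro Rset_sum Rset_mul) (auto simp: Fset_def sig_word_Rset)
  moreover have "Fmul p n \<gamma> a b w \<noteq> (\<lambda>v. 0) \<Longrightarrow> l \<in> set w \<Longrightarrow> snd l \<in> {1..m}" for w l
  proof -
    assume "Fmul p n \<gamma> a b w \<noteq> (\<lambda>v. 0)" "l \<in> set w"
    then have "w \<in> supp (Fmul p n \<gamma> a b)" by (simp add: supp_def)
    then obtain u v where "w = u @ v" "u \<in> supp a" "v \<in> supp b" using s by auto
    then show ?thesis using a b \<open>l \<in> set w\<close> by (auto simp: Fset_def supp_def)
  qed
  ultimately show ?thesis by (auto simp: Fset_def supp_def)
qed

lemma Wt_Nil1: "Wt [] y h = 1" by simp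

lemma Phi_zerof: "Phi c (\<lambda>y h. 0) y h = 0"
  by (simp add: Phi_def Phiw_def)

lemma Phi_sm: "Phi (sm r w) f y h = r y * Phiw w f y h"
  using Phi_superset[of "{w}" "sm r w" f y h] supp_sm[of r w] by (simp add: sm_def)

lemma Phi_Fzero: "Phi Fzero f y h = 0"
  by (simp add: Phi_def supp_def Fzero_def)

lemma Phi_two: "w1 \<noteq> w2 \<Longrightarrow> supp c \<subseteq> {w1, w2} \<Longrightarrow>
   Phi c f y h = c w1 y * Phiw w1 f y h + c w2 y * Phiw w2 f y h"
  using Phi_superset[of "{w1, w2}" c f y h] by simp

lemma Mv_XY: "Mv [(True, i), (False, i)] y = y" "Mv [(False, i), (True, i)] y = y"
  by (simp_all add: Mv_def)

lemma wdeg_XY: "wdeg [(True, i), (False, i)] = (\<lambda>j. 0)" "wdeg [(False, i), (True, i)] = (\<lambda>j. 0)"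
  by (auto simp: wdeg_Cons ldeg_def)

lemma Mv_cross: "Mv [(True, i), (False, j)] y = Mv [(False, j), (True, i)] y"
  by (simp add: Mv_def add.commute)

lemma wdeg_cross: "wdeg [(True, i), (False, j)] = wdeg [(False, j), (True, i)]"
  by (auto simp: wdeg_Cons ldeg_def)

lemma oneR_in: "y \<in> V \<Longrightarrow> oneR p n y = 1" by (simp add: oneR_def)
lemma oneR_out: "y \<notin> V \<Longrightarrow> oneR p n y = 0" by (simp add: oneR_def)

lemma sig_tt_out: "y \<notin> V \<Longrightarrow> sig p n \<gamma> i (tt p n \<gamma> i) y = 0"
  by (simp add: sig_pc tt_Rset pc_def)

lemma rels_prop: "r \<in> rels p n m \<gamma> \<Longrightarrow> r \<in> Fset p n m \<and> (\<forall>f y h. Phi r f y h = (0::'k::field_char_0))"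
proof -
  assume "r \<in> rels p n m \<gamma>"
  then consider
    (a) i where "i \<in> {1..m}" "r = (\<lambda>w. if w = [(False, i), (True, i)] then oneR p n
           else if w = [] then (\<lambda>v. - tt p n \<gamma> i v) else (\<lambda>v. 0))"
  | (b) i where "i \<in> {1..m}" "r = (\<lambda>w. if w = [(True, i), (False, i)] then oneR p n
           else if w = [] then (\<lambda>v. - sig p n \<gamma> i (tt p n \<gamma> i) v) else (\<lambda>v. 0))"
  | (c) i j where "i \<in> {1..m}" "j \<in> {1..m}" "i \<noteq> j" "r = (\<lambda>w. if w = [(True, i), (False, j)] then oneR p n
           else if w = [(False, j), (True, i)] then (\<lambda>v. - mu p n \<gamma> i j * oneR p n v)
           else (\<lambda>v. 0))"
    unfolding rels_def by blast
  then show ?thesis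
  proof cases
    case (a i)
    have F: "r \<in> Fset p n m"
      using a by (auto simp: Fset_def Rset_oneR Rset_neg[OF tt_Rset] Rset_zero
          intro: finite_subset[of _ "{[(False, i), (True, i)], []}"])
    have s: "supp r \<subseteq> {[(False, i), (True, i)], []}" using a by (auto simp: supp_def)
    have "Phi r f y h = 0" for f y h
      using Phi_two[OF _ s, of f y h] a
      by (cases "y \<in> V") (auto simp: oneR_in oneR_out Phiw_def Mv_XY wdeg_XY Wt_YX tt_def Wt_Nil1 simp del: Wt.simps)
    then show ?thesis using F by blast
  next
    case (b i)
    have F: "r \<in> Fset p n m"
      using b by (auto simp: Fset_def Rset_oneR Rset_neg[OF sig_word_Rset] Rset_zero
          Rset_neg[OF pc_Rset[OF tt_Rset]] sig_pc[OF tt_Rset]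
          intro: finite_subset[of _ "{[(True, i), (False, i)], []}"])
    have s: "supp r \<subseteq> {[(True, i), (False, i)], []}" using b by (auto simp: supp_def)
    have "Phi r f y h = 0" for f y h
      using Phi_two[OF _ s, of f y h] b
      by (cases "y \<in> V") (auto simp: oneR_in oneR_out Phiw_def Mv_XY wdeg_XY Wt_XY sig_tt_out Wt_Nil1 simp del: Wt.simps)
    then show ?thesis using F by blast
  next
    case (c i j)
    have F: "r \<in> Fset p n m"
      using c Rset_const[of "- mu p n \<gamma> i j" p n] by (auto simp: Fset_def Rset_oneR Rset_zero
          intro: finite_subset[of _ "{[(True, i), (False, j)], [(False, j), (True, i)]}"])
    have s: "supp r \<subseteq> {[(True, i), (False, j)], [(False, j), (True, i)]}" using c by (auto simp: supp_def)
    have "Phi r f y h = 0" for f y h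
      using Phi_two[OF _ s, of f y h] c
      by (cases "y \<in> V") (auto simp: oneR_in oneR_out Phiw_def Mv_cross wdeg_cross Wt_cross Wt_Nil1 simp del: Wt.simps)
    then show ?thesis using F by blast
  qed
qed

lemma Jgen_prop: "a \<in> Jgen p n m \<gamma> \<Longrightarrow> a \<in> Fset p n m \<and> (\<forall>f y h. Phi a f y h = (0::'k::field_char_0))"
proof (induction rule: Jgen.induct)
  case (rel r) then show ?case by (rule rels_prop)
next
  case zero then show ?case by (simp add: Fzero_Fset Phi_Fzero)
next
  case (add a b) then show ?case by (simp add: Fadd_Fset Phi_add)
next
  case (lmul c a)
  then have "Phi a f = (\<lambda>y h. 0)" for f by (auto intro!: ext)
  then show ?case using lmul by (simp add: Fmul_Fset Phi_mul Phi_zerof)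
next
  case (rmul c a) then show ?case by (simp add: Fmul_Fset Phi_mul)
qed

end


definition Fneg :: "'k::field elt \<Rightarrow> 'k elt" where
  "Fneg a = (\<lambda>w v. - a w v)"

definition cst :: "nat \<Rightarrow> nat \<Rightarrow> 'k::field \<Rightarrow> (nat \<Rightarrow> 'k) \<Rightarrow> 'k" where
  "cst p n \<kappa> = (\<lambda>x. \<kappa> * oneR p n x)"

lemma Rset_diff: "a \<in> Rset p n \<Longrightarrow> b \<in> Rset p n \<Longrightarrow> (\<lambda>x. a x - b x) \<in> Rset p n"
  using Rset_add[OF _ Rset_neg, of a p n b] by simp

lemma sig_word_Nil: "sig_word p n \<gamma> [] r = r"
  by (simp add: sig_word_def)

context rep begin

definition eqv :: "'k::field_char_0 elt \<Rightarrow> 'k elt \<Rightarrow> bool" where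
  "eqv c d \<longleftrightarrow> c \<in> Fset p n m \<and> d \<in> Fset p n m \<and> Fadd c (Fneg d) \<in> Jgen p n m \<gamma>"

lemma Jgen_Fset: "a \<in> Jgen p n m \<gamma> \<Longrightarrow> a \<in> (Fset p n m :: 'k::field_char_0 elt set)"
  using Jgen_prop by blast

lemma take_eq_len: "k \<le> length w \<Longrightarrow> take k w = u \<Longrightarrow> k = length u"
  by auto

lemma sm_mul: "s \<in> Rset p n \<Longrightarrow>
   Fmul p n \<gamma> (sm r u) (sm s v) = sm (\<lambda>x. r x * sig_word p n \<gamma> u s x) (u @ v)"
proof (rule ext)+
  fix w0 x assume s: "s \<in> Rset p n"
  have "Fmul p n \<gamma> (sm r u) (sm s v) w0 x =
     (\<Sum>k\<in>{0..length w0}. if k = length u \<and> w0 = u @ v then r x * sig_word p n \<gamma> u s x else 0)"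
    unfolding Fmul_def
  proof (rule sum.cong[OF refl])
    fix k assume k: "k \<in> {0..length w0}"
    show "sm r u (take k w0) x * sig_word p n \<gamma> (take k w0) (sm s v (drop k w0)) x =
      (if k = length u \<and> w0 = u @ v then r x * sig_word p n \<gamma> u s x else 0)"
    proof (cases "take k w0 = u \<and> drop k w0 = v")
      case True
      have "k = length u" using True k by auto
      moreover have "w0 = u @ v" using True by (metis append_take_drop_id)
      ultimately show ?thesis using True by (simp add: sm_def)
    next
      case False
      have nz: "\<not> (k = length u \<and> w0 = u @ v)" using False by auto
      have z: "sm r u (take k w0) x * sig_word p n \<gamma> (take k w0) (sm s v (drop k w0)) x = 0"
        using False by (auto simp: sm_def sig_word_zero)
      show ?thesis by (subst if_not_P[OF nz]) (rule z)
    qed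
  qed
  also have "\<dots> = sm (\<lambda>x. r x * sig_word p n \<gamma> u s x) (u @ v) w0 x"
    by (auto simp: sm_def sum.delta)
  finally show "Fmul p n \<gamma> (sm r u) (sm s v) w0 x = sm (\<lambda>x. r x * sig_word p n \<gamma> u s x) (u @ v) w0 x" .
qed

lemma scal_mul: "c \<in> Fset p n m \<Longrightarrow> Fmul p n \<gamma> (sm r []) c = (\<lambda>w x. r x * c w x)"
proof (rule ext)+
  fix w x assume c: "c \<in> Fset p n m"
  have "Fmul p n \<gamma> (sm r []) c w x = (\<Sum>k\<in>{0..length w}. if k = 0 then r x * c w x else 0)"
    unfolding Fmul_def
    by (rule sum.cong[OF refl]) (auto simp: sm_def sig_word_Nil)
  also have "\<dots> = r x * c w x" by simp
  finally show "Fmul p n \<gamma> (sm r []) c w x = r x * c w x" .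
qed

lemma sig_word_oneR: "sig_word p n \<gamma> u (oneR p n) = oneR p n"
  by (simp add: sig_word_pc Rset_oneR pc_oneR)

lemma sig_word_cst: "sig_word p n \<gamma> u (cst p n \<kappa>) = cst p n \<kappa>"
  by (simp add: cst_def sig_word_pc Rset_oneR pc_oneR Rset_const pc_smul)

lemma cst_Rset: "cst p n \<kappa> \<in> Rset p n"
  by (simp add: cst_def Rset_const)

lemma sig_word_add: "a \<in> Rset p n \<Longrightarrow> b \<in> Rset p n \<Longrightarrow>
  sig_word p n \<gamma> u (\<lambda>x. a x + b x) = (\<lambda>x. sig_word p n \<gamma> u a x + sig_word p n \<gamma> u b x)"
  by (simp add: sig_word_pc Rset_add pc_add)

lemma sig_word_neg: "a \<in> Rset p n \<Longrightarrow>
  sig_word p n \<gamma> u (\<lambda>x. - a x) = (\<lambda>x. - sig_word p n \<gamma> u a x)"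
  by (simp add: sig_word_pc Rset_neg pc_neg)

lemma Fneg_Fset: "a \<in> Fset p n m \<Longrightarrow> Fneg a \<in> Fset p n m"
  by (auto simp: Fset_def Fneg_def Rset_neg fun_eq_iff)

lemma Fneg_Jgen: "a \<in> Jgen p n m \<gamma> \<Longrightarrow> Fneg a \<in> (Jgen p n m \<gamma> :: 'k::field_char_0 elt set)"
proof -
  assume a: "a \<in> Jgen p n m \<gamma>"
  have aF: "a \<in> Fset p n m" using a by (rule Jgen_Fset)
  have "Fmul p n \<gamma> (sm (cst p n (-1)) []) a = Fneg a"
    using aF by (auto simp: scal_mul Fneg_def cst_def Fset_def Rset_oneR_mul)
  moreover have "sm (cst p n (-1)) [] \<in> Fset p n m" by (simp add: sm_Fset cst_Rset valid_def)
  ultimately show ?thesis using Jgen.lmul[OF _ a] by metis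
qed

lemma eqv_refl: "c \<in> Fset p n m \<Longrightarrow> eqv c c"
proof -
  assume "c \<in> Fset p n m"
  moreover have "Fadd c (Fneg c) = Fzero" by (simp add: Fadd_def Fneg_def Fzero_def)
  ultimately show ?thesis by (simp add: eqv_def Jgen.zero)
qed

lemma eqv_sym: "eqv c d \<Longrightarrow> eqv d c"
proof -
  assume e: "eqv c d"
  have "Fadd d (Fneg c) = Fneg (Fadd c (Fneg d))" by (simp add: Fadd_def Fneg_def)
  then show ?thesis using e Fneg_Jgen by (auto simp: eqv_def)
qed

lemma eqv_trans: "eqv c d \<Longrightarrow> eqv d e \<Longrightarrow> eqv c e"
proof -
  assume e1: "eqv c d" and e2: "eqv d e"
  have "Fadd c (Fneg e) = Fadd (Fadd c (Fneg d)) (Fadd d (Fneg e))" by (simp add: Fadd_def Fneg_def)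
  then show ?thesis using e1 e2 Jgen.add by (auto simp: eqv_def)
qed

lemma eqv_add: "eqv a b \<Longrightarrow> eqv c d \<Longrightarrow> eqv (Fadd a c) (Fadd b d)"
proof -
  assume e1: "eqv a b" and e2: "eqv c d"
  have "Fadd (Fadd a c) (Fneg (Fadd b d)) = Fadd (Fadd a (Fneg b)) (Fadd c (Fneg d))"
    by (auto simp: Fadd_def Fneg_def fun_eq_iff algebra_simps)
  then show ?thesis using e1 e2 Jgen.add by (auto simp: eqv_def Fadd_Fset)
qed

lemma Fmul_diff_left: "Fmul p n \<gamma> (Fadd a (Fneg b)) x = Fadd (Fmul p n \<gamma> a x) (Fneg (Fmul p n \<gamma> b x))"
  by (simp add: Fmul_def Fadd_def Fneg_def algebra_simps sum_subtractf)

lemma Fmul_diff_right: "a \<in> Fset p n m \<Longrightarrow> b \<in> Fset p n m \<Longrightarrow>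
  Fmul p n \<gamma> x (Fadd a (Fneg b)) = Fadd (Fmul p n \<gamma> x a) (Fneg (Fmul p n \<gamma> x b))"
proof (rule ext)+
  fix w v assume a: "a \<in> Fset p n m" and b: "b \<in> Fset p n m"
  have ab: "a u \<in> Rset p n" "b u \<in> Rset p n" for u using a b by (auto simp: Fset_def)
  have "sig_word p n \<gamma> u (\<lambda>y. a w' y + - b w' y) = (\<lambda>y. sig_word p n \<gamma> u (a w') y - sig_word p n \<gamma> u (b w') y)" for u w'
    using ab by (simp add: sig_word_pc Rset_diff pc_def onV_def fun_eq_iff)
  then show "Fmul p n \<gamma> x (Fadd a (Fneg b)) w v = Fadd (Fmul p n \<gamma> x a) (Fneg (Fmul p n \<gamma> x b)) w v"
    by (simp add: Fmul_def Fadd_def Fneg_def algebra_simps sum_subtractf)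
qed

lemma eqv_lmul: "x \<in> Fset p n m \<Longrightarrow> eqv a b \<Longrightarrow> eqv (Fmul p n \<gamma> x a) (Fmul p n \<gamma> x b)"
proof -
  assume x: "x \<in> Fset p n m" and e: "eqv a b"
  have "Fmul p n \<gamma> x (Fadd a (Fneg b)) \<in> Jgen p n m \<gamma>" using x e by (simp add: eqv_def Jgen.lmul)
  then show ?thesis using x e Fmul_diff_right[of a b x] by (simp add: eqv_def Fmul_Fset)
qed

lemma eqv_rmul: "x \<in> Fset p n m \<Longrightarrow> eqv a b \<Longrightarrow> eqv (Fmul p n \<gamma> a x) (Fmul p n \<gamma> b x)"
proof -
  assume x: "x \<in> Fset p n m" and e: "eqv a b"
  have "Fmul p n \<gamma> (Fadd a (Fneg b)) x \<in> Jgen p n m \<gamma>" using x e by (simp add: eqv_def Jgen.rmul)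
  then show ?thesis using x e Fmul_diff_left[of a b x] by (simp add: eqv_def Fmul_Fset)
qed

end


definition swp :: "letter \<Rightarrow> letter \<Rightarrow> bool" where
  "swp l a \<longleftrightarrow> snd l \<noteq> snd a \<and> fst l \<noteq> fst a"

definition normal :: "letter list \<Rightarrow> bool" where
  "normal w \<longleftrightarrow> (\<forall>i. (True, i) \<in> set w \<longrightarrow> (False, i) \<notin> set w)"

lemma valid_append[simp]: "valid m (u @ v) \<longleftrightarrow> valid m u \<and> valid m v"
  by (auto simp: valid_def)
lemma valid_Cons[simp]: "valid m (l # u) \<longleftrightarrow> snd l \<in> {1..m} \<and> valid m u"
  by (auto simp: valid_def)
lemma valid_Nil[simp]: "valid m []"
  by (auto simp: valid_def)

context rep begin

lemma cst_mul: "(\<lambda>x. cst p n a x * cst p n b x) = cst p n (a * b)"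
  by (auto simp: cst_def oneR_def onV_def fun_eq_iff)

lemma cst_1: "cst p n 1 = oneR p n"
  by (simp add: cst_def)

lemma sm_scal: "s \<in> Rset p n \<Longrightarrow> Fmul p n \<gamma> (sm r []) (sm s w) = sm (\<lambda>x. r x * s x) w"
  by (simp add: sm_mul sig_word_Nil)

lemma sm_mono: "Fmul p n \<gamma> (sm r []) (mono w) = sm (\<lambda>x. r x * oneR p n x) w"
  by (simp add: sm_scal Rset_oneR)

lemma Fmul_add_left: "Fmul p n \<gamma> (Fadd a b) x = Fadd (Fmul p n \<gamma> a x) (Fmul p n \<gamma> b x)"
  by (simp add: Fmul_def Fadd_def algebra_simps sum.distrib)

lemma Fmul_add_right: "a \<in> Fset p n m \<Longrightarrow> b \<in> Fset p n m \<Longrightarrow>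
  Fmul p n \<gamma> x (Fadd a b) = Fadd (Fmul p n \<gamma> x a) (Fmul p n \<gamma> x b)"
proof (rule ext)+
  fix w v assume a: "a \<in> Fset p n m" and b: "b \<in> Fset p n m"
  have ab: "a u \<in> Rset p n" "b u \<in> Rset p n" for u using a b by (auto simp: Fset_def)
  have "sig_word p n \<gamma> u (\<lambda>y. a w' y + b w' y) = (\<lambda>y. sig_word p n \<gamma> u (a w') y + sig_word p n \<gamma> u (b w') y)" for u w'
    using ab by (simp add: sig_word_add)
  then show "Fmul p n \<gamma> x (Fadd a b) w v = Fadd (Fmul p n \<gamma> x a) (Fmul p n \<gamma> x b) w v"
    by (simp add: Fmul_def Fadd_def algebra_simps sum.distrib)
qed

lemma mono_ctx: "r \<in> Rset p n \<Longrightarrow>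
   Fmul p n \<gamma> (mono u) (Fmul p n \<gamma> (sm r w) (mono v)) = sm (sig_word p n \<gamma> u r) (u @ w @ v)"
proof -
  assume r: "r \<in> Rset p n"
  have "Fmul p n \<gamma> (sm r w) (mono v) = sm r (w @ v)"
    using r by (simp add: sm_mul Rset_oneR sig_word_oneR Rset_mul_oneR)
  moreover have "(\<lambda>x. oneR p n x * sig_word p n \<gamma> u r x) = sig_word p n \<gamma> u r"
    using r by (simp add: Rset_oneR_mul sig_word_Rset)
  ultimately show ?thesis using r by (simp add: sm_mul)
qed

lemma eqv_ctx: "eqv a b \<Longrightarrow> valid m u \<Longrightarrow> valid m v \<Longrightarrow>
   eqv (Fmul p n \<gamma> (mono u) (Fmul p n \<gamma> a (mono v))) (Fmul p n \<gamma> (mono u) (Fmul p n \<gamma> b (mono v)))"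
  by (intro eqv_lmul eqv_rmul mono_Fset)

lemma eqv_word_ctx: "eqv (mono w) (sm r w') \<Longrightarrow> r \<in> Rset p n \<Longrightarrow> valid m u \<Longrightarrow> valid m v \<Longrightarrow>
   eqv (mono (u @ w @ v)) (sm (sig_word p n \<gamma> u r) (u @ w' @ v) :: 'k::field_char_0 elt)"
proof -
  assume e: "eqv (mono w) (sm r w' :: 'k elt)" and r: "r \<in> Rset p n" and vu: "valid m u" and vv: "valid m v"
  have 1: "Fmul p n \<gamma> (mono u) (Fmul p n \<gamma> (mono w) (mono v)) = (mono (u @ w @ v) :: 'k elt)"
    using mono_ctx[OF Rset_oneR, of u w v] by (simp add: sig_word_oneR)
  have 2: "Fmul p n \<gamma> (mono u) (Fmul p n \<gamma> (sm r w') (mono v)) = sm (sig_word p n \<gamma> u r) (u @ w' @ v)"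
    using mono_ctx[OF r, of u w' v] .
  show ?thesis using eqv_ctx[OF e vu vv] unfolding 1 2 .
qed

lemma eqv_scale: "eqv (mono w') (sm s w'') \<Longrightarrow> r \<in> Rset p n \<Longrightarrow> s \<in> Rset p n \<Longrightarrow>
   eqv (sm r w') (sm (\<lambda>x. r x * s x) w'')"
proof -
  assume e: "eqv (mono w') (sm s w'')" and r: "r \<in> Rset p n" and s: "s \<in> Rset p n"
  have "eqv (Fmul p n \<gamma> (sm r []) (mono w')) (Fmul p n \<gamma> (sm r []) (sm s w''))"
    by (rule eqv_lmul[OF sm_Fset[OF r] e]) simp
  moreover have "(\<lambda>x. r x * oneR p n x) = r" using r by (simp add: Rset_mul_oneR)
  ultimately show ?thesis using s by (simp add: sm_mono sm_scal)
qed

lemma eqv_chain: "eqv (mono w) (sm r w') \<Longrightarrow> eqv (mono w') (sm s w'') \<Longrightarrow> r \<in> Rset p n \<Longrightarrow> s \<in> Rset p n \<Longrightarrow>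
   eqv (mono w) (sm (\<lambda>x. r x * s x) w'')"
  using eqv_trans eqv_scale by blast

lemma eqv_chain_cst: "eqv (mono w) (sm (cst p n a) w') \<Longrightarrow> eqv (mono w') (sm (cst p n b) w'') \<Longrightarrow>
   eqv (mono w) (sm (cst p n (a * b)) w'')"
  using eqv_chain[of w "cst p n a" w' "cst p n b" w''] by (simp add: cst_Rset cst_mul)

lemma eqv_inv: "eqv (mono w) (sm (cst p n \<kappa>) w') \<Longrightarrow> \<kappa> \<noteq> 0 \<Longrightarrow>
   eqv (mono w') (sm (cst p n (inverse \<kappa>)) w)"
proof -
  assume e: "eqv (mono w) (sm (cst p n \<kappa>) w')" and k: "\<kappa> \<noteq> 0"
  have e': "eqv (sm (cst p n \<kappa>) w') (mono w)" using e by (rule eqv_sym)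
  have "eqv (Fmul p n \<gamma> (sm (cst p n (inverse \<kappa>)) []) (sm (cst p n \<kappa>) w'))
            (Fmul p n \<gamma> (sm (cst p n (inverse \<kappa>)) []) (mono w))"
    by (rule eqv_lmul[OF sm_Fset[OF cst_Rset] e']) simp
  then show ?thesis using k
    by (simp add: sm_scal cst_Rset Rset_oneR cst_mul flip: cst_1)
qed

lemma Fneg_sm: "Fneg (sm r w) = sm (\<lambda>x. - r x) w"
  by (auto simp: Fneg_def sm_def fun_eq_iff)

lemma rel_ctx: "Fadd (sm (oneR p n) A) (sm b B) \<in> Jgen p n m \<gamma> \<Longrightarrow> b \<in> Rset p n \<Longrightarrow>
   valid m u \<Longrightarrow> valid m v \<Longrightarrow> valid m A \<Longrightarrow> valid m B \<Longrightarrow>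
   eqv (mono (u @ A @ v)) (sm (\<lambda>x. - sig_word p n \<gamma> u b x) (u @ B @ v))"
proof -
  assume J: "Fadd (sm (oneR p n) A) (sm b B) \<in> Jgen p n m \<gamma>" and b: "b \<in> Rset p n"
    and vu: "valid m u" and vv: "valid m v" and vA: "valid m A" and vB: "valid m B"
  have "Fmul p n \<gamma> (mono u) (Fmul p n \<gamma> (Fadd (mono A) (sm b B)) (mono v)) \<in> Jgen p n m \<gamma>"
    using J vu vv by (intro Jgen.lmul Jgen.rmul mono_Fset)
  moreover have "Fmul p n \<gamma> (mono u) (Fmul p n \<gamma> (Fadd (mono A) (sm b B)) (mono v))
     = Fadd (mono (u @ A @ v)) (Fneg (sm (\<lambda>x. - sig_word p n \<gamma> u b x) (u @ B @ v)))"
  proof -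
    have "Fmul p n \<gamma> (Fadd (mono A) (sm b B)) (mono v) =
       Fadd (Fmul p n \<gamma> (mono A) (mono v)) (Fmul p n \<gamma> (sm b B) (mono v))"
      by (rule Fmul_add_left)
    then have "Fmul p n \<gamma> (mono u) (Fmul p n \<gamma> (Fadd (mono A) (sm b B)) (mono v))
       = Fadd (Fmul p n \<gamma> (mono u) (Fmul p n \<gamma> (mono A) (mono v))) (Fmul p n \<gamma> (mono u) (Fmul p n \<gamma> (sm b B) (mono v)))"
      using vA vB vv b by (simp add: Fmul_add_right Fmul_Fset mono_Fset sm_Fset)
    also have "\<dots> = Fadd (mono (u @ A @ v)) (sm (sig_word p n \<gamma> u b) (u @ B @ v))"
      using b by (simp add: mono_ctx Rset_oneR sig_word_oneR)
    finally show ?thesis by (simp add: Fneg_sm)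
  qed
  ultimately show ?thesis
    using vu vv vA vB b by (simp add: eqv_def mono_Fset sm_Fset Rset_neg sig_word_Rset)
qed

lemma two_term: "A \<noteq> B \<Longrightarrow> (\<lambda>w. if w = A then a else if w = B then b else (\<lambda>v. 0)) = Fadd (sm a A) (sm b B)"
  by (auto simp: Fadd_def sm_def fun_eq_iff)

lemma mu_nz: "mu p n \<gamma> i j \<noteq> (0::'k::field)"
  by (simp add: mu_def)

lemma S1: "i \<in> {1..m} \<Longrightarrow> j \<in> {1..m} \<Longrightarrow> i \<noteq> j \<Longrightarrow> valid m u \<Longrightarrow> valid m v \<Longrightarrow>
   eqv (mono (u @ [(True, i), (False, j)] @ v)) (sm (cst p n (mu p n \<gamma> i j)) (u @ [(False, j), (True, i)] @ v) :: 'k::field_char_0 elt)"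
proof -
  assume i: "i \<in> {1..m}" and j: "j \<in> {1..m}" and ij: "i \<noteq> j" and vu: "valid m u" and vv: "valid m v"
  let ?r = "(\<lambda>w. if w = [(True, i), (False, j)] then oneR p n
           else if w = [(False, j), (True, i)] then (\<lambda>v. - mu p n \<gamma> i j * oneR p n v)
           else (\<lambda>v. 0)) :: 'k elt"
  have "?r \<in> rels p n m \<gamma>" using i j ij unfolding rels_def by blast
  then have "?r \<in> Jgen p n m \<gamma>" by (rule Jgen.rel)
  moreover have "?r = Fadd (mono [(True, i), (False, j)]) (sm (cst p n (- mu p n \<gamma> i j)) [(False, j), (True, i)])"
    by (subst two_term) (auto simp: cst_def)
  ultimately have "Fadd (mono [(True, i), (False, j)]) (sm (cst p n (- mu p n \<gamma> i j)) [(False, j), (True, i)]) \<in> (Jgen p n m \<gamma> :: 'k elt set)"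
    by simp
  note e = rel_ctx[OF this cst_Rset vu vv]
  have "(\<lambda>x. - sig_word p n \<gamma> u (cst p n (- mu p n \<gamma> i j)) x) = (cst p n (mu p n \<gamma> i j) :: (nat \<Rightarrow> 'k) \<Rightarrow> 'k)"
    by (simp only: sig_word_cst) (simp add: cst_def)
  with e i j show ?thesis by simp
qed

lemma S2a: "i \<in> {1..m} \<Longrightarrow> valid m u \<Longrightarrow> valid m v \<Longrightarrow>
   eqv (mono (u @ [(False, i), (True, i)] @ v)) (sm (sig_word p n \<gamma> u (tt p n \<gamma> i)) (u @ v) :: 'k::field_char_0 elt)"
proof -
  assume i: "i \<in> {1..m}" and vu: "valid m u" and vv: "valid m v"
  let ?r = "(\<lambda>w. if w = [(False, i), (True, i)] then oneR p n
           else if w = [] then (\<lambda>v. - tt p n \<gamma> i v) else (\<lambda>v. 0)) :: 'k elt"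
  have "?r \<in> rels p n m \<gamma>" using i unfolding rels_def by blast
  then have "?r \<in> Jgen p n m \<gamma>" by (rule Jgen.rel)
  moreover have "?r = Fadd (mono [(False, i), (True, i)]) (sm (\<lambda>v. - tt p n \<gamma> i v) [])"
    by (subst two_term) auto
  ultimately have J: "Fadd (mono [(False, i), (True, i)]) (sm (\<lambda>v. - tt p n \<gamma> i v) []) \<in> (Jgen p n m \<gamma> :: 'k elt set)"
    by simp
  have "sig_word p n \<gamma> u (\<lambda>v. - tt p n \<gamma> i v) = (\<lambda>x. - sig_word p n \<gamma> u (tt p n \<gamma> i) x :: 'k)"
    by (simp add: sig_word_neg tt_Rset)
  with rel_ctx[OF J Rset_neg[OF tt_Rset] vu vv] i
  show ?thesis by simp
qed

lemma S2b: "i \<in> {1..m} \<Longrightarrow> valid m u \<Longrightarrow> valid m v \<Longrightarrow>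
   eqv (mono (u @ [(True, i), (False, i)] @ v)) (sm (sig_word p n \<gamma> u (sig p n \<gamma> i (tt p n \<gamma> i))) (u @ v) :: 'k::field_char_0 elt)"
proof -
  assume i: "i \<in> {1..m}" and vu: "valid m u" and vv: "valid m v"
  let ?t = "sig p n \<gamma> i (tt p n \<gamma> i) :: (nat \<Rightarrow> 'k) \<Rightarrow> 'k"
  have tR: "?t \<in> Rset p n" by (simp add: sig_pc tt_Rset pc_Rset)
  let ?r = "(\<lambda>w. if w = [(True, i), (False, i)] then oneR p n
           else if w = [] then (\<lambda>v. - ?t v) else (\<lambda>v. 0)) :: 'k elt"
  have "?r \<in> rels p n m \<gamma>" using i unfolding rels_def by blast
  then have "?r \<in> Jgen p n m \<gamma>" by (rule Jgen.rel)
  moreover have "?r = Fadd (mono [(True, i), (False, i)]) (sm (\<lambda>v. - ?t v) [])"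
    by (subst two_term) auto
  ultimately have J: "Fadd (mono [(True, i), (False, i)]) (sm (\<lambda>v. - ?t v) []) \<in> (Jgen p n m \<gamma> :: 'k elt set)"
    by simp
  have "sig_word p n \<gamma> u (\<lambda>v. - ?t v) = (\<lambda>x. - sig_word p n \<gamma> u ?t x :: 'k)"
    by (simp add: sig_word_neg tR)
  with rel_ctx[OF J Rset_neg[OF tR] vu vv] i
  show ?thesis by simp
qed

end


lemma normal_subset: "normal w \<Longrightarrow> set x \<subseteq> set w \<Longrightarrow> normal x"
  by (auto simp: normal_def)

lemma wdeg_mset: "mset a = mset b \<Longrightarrow> wdeg a = wdeg b"
proof -
  assume e: "mset a = mset b"
  have "length (filter (\<lambda>l. l = x) a) = length (filter (\<lambda>l. l = x) b)" for x
  proof -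
    have "length (filter (\<lambda>l. l = x) a) = count (mset a) x" by (induction a) auto
    also have "\<dots> = count (mset b) x" using e by simp
    also have "\<dots> = length (filter (\<lambda>l. l = x) b)" by (induction b) auto
    finally show ?thesis .
  qed
  then show ?thesis by (simp add: wdeg_def)
qed

lemma closest: "\<not> normal w \<Longrightarrow> \<exists>u b i x v. w = u @ [(b, i)] @ x @ [(\<not> b, i)] @ v \<and> normal x \<and> (\<forall>l\<in>set x. snd l \<noteq> i)"
proof (induction w)
  case Nil then show ?case by (simp add: normal_def)
next
  case (Cons a w)
  show ?case
  proof (cases "normal w")
    case False
    then obtain u b i x v where "w = u @ [(b, i)] @ x @ [(\<not> b, i)] @ v" "normal x" "\<forall>l\<in>set x. snd l \<noteq> i"
      using Cons.IH by blast
    then show ?thesis by (intro exI[where x = "a # u"]) auto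
  next
    case True
    obtain b i where a: "a = (b, i)" by (cases a)
    have inw: "(\<not> b, i) \<in> set w"
    proof (rule ccontr)
      assume nin: "(\<not> b, i) \<notin> set w"
      have "normal (a # w)"
        unfolding normal_def
      proof (intro allI impI)
        fix j assume j: "(True, j) \<in> set (a # w)"
        show "(False, j) \<notin> set (a # w)"
        proof
          assume j2: "(False, j) \<in> set (a # w)"
          show False
          proof (cases "j = i")
            case True
            then show False using True j j2 nin a \<open>normal w\<close> by (cases b) (auto simp: normal_def)
          next
            case False
            then show False using j j2 a \<open>normal w\<close> by (auto simp: normal_def)
          qed
        qed
      qed
      then show False using Cons.prems by simp
    qed
    then have "\<exists>z\<in>set w. snd z = i" by force
    then obtain ys z zs where w: "w = ys @ z # zs" and z: "snd z = i" and ys: "\<forall>y\<in>set ys. \<not> snd y = i"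
      using split_list_first_prop[of w "\<lambda>z. snd z = i"] by blast
    obtain c where zc: "z = (c, i)" using z by (cases z) auto
    have "c = (\<not> b)"
    proof (rule ccontr)
      assume "c \<noteq> (\<not> b)"
      then have "c = b" by simp
      then have "(b, i) \<in> set w" using w zc by simp
      then show False using inw \<open>normal w\<close> by (cases b) (auto simp: normal_def)
    qed
    moreover have "normal ys" using \<open>normal w\<close> w by (auto intro: normal_subset)
    ultimately show ?thesis using w zc ys a
      by (intro exI[where x = "[]"] exI[where x = b] exI[where x = i] exI[where x = ys] exI[where x = zs]) auto
  qed
qed


context rep begin

definition NF :: "(nat \<Rightarrow> int) \<Rightarrow> 'k::field_char_0 elt set" where
  "NF g = {d \<in> Fset p n m. \<forall>w. d w \<noteq> (\<lambda>v. 0) \<longrightarrow> normal w \<and> wdeg w = g}"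

lemma swap: "swp l a \<Longrightarrow> snd l \<in> {1..m} \<Longrightarrow> snd a \<in> {1..m} \<Longrightarrow> valid m u \<Longrightarrow> valid m v \<Longrightarrow>
   \<exists>\<kappa>. \<kappa> \<noteq> 0 \<and> eqv (mono (u @ [l, a] @ v)) (sm (cst p n \<kappa>) (u @ [a, l] @ v) :: 'k::field_char_0 elt)"
proof -
  assume s: "swp l a" and l: "snd l \<in> {1..m}" and a: "snd a \<in> {1..m}" and vu: "valid m u" and vv: "valid m v"
  obtain b i where li: "l = (b, i)" by (cases l)
  obtain c j where aj: "a = (c, j)" by (cases a)
  have ij: "i \<noteq> j" "b \<noteq> c" using s li aj by (auto simp: swp_def)
  have i: "i \<in> {1..m}" and j: "j \<in> {1..m}" using l a li aj by auto
  show ?thesis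
  proof (cases b)
    case True
    then have "c = False" using ij by simp
    then have "l = (True, i)" "a = (False, j)" using True li aj by auto
    then show ?thesis using S1[OF i j ij(1) vu vv]
      by (intro exI[where x = "mu p n \<gamma> i j"]) (simp add: mu_nz)
  next
    case False
    then have "c = True" using ij by simp
    have "eqv (mono (u @ [(True, j), (False, i)] @ v)) (sm (cst p n (mu p n \<gamma> j i)) (u @ [(False, i), (True, j)] @ v) :: 'k elt)"
      using S1[OF j i ij(1)[symmetric] vu vv] .
    from eqv_inv[OF this mu_nz] show ?thesis using False \<open>c = True\<close> li aj
      by (intro exI[where x = "inverse (mu p n \<gamma> j i)"]) (auto simp: mu_nz)
  qed
qed

lemma bubble: "\<forall>a\<in>set A. swp l a \<Longrightarrow> valid m (l # A) \<Longrightarrow> valid m u \<Longrightarrow> valid m v \<Longrightarrow>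
   \<exists>\<kappa>. \<kappa> \<noteq> 0 \<and> eqv (mono (u @ l # A @ v)) (sm (cst p n \<kappa>) (u @ A @ l # v) :: 'k::field_char_0 elt)"
proof (induction A arbitrary: u)
  case Nil
  have "eqv (mono (u @ l # v)) (sm (cst p n 1) (u @ l # v) :: 'k elt)"
    using Nil by (simp add: cst_1 eqv_refl mono_Fset)
  then show ?case by (intro exI[where x = "1::'k"]) simp
next
  case (Cons a A)
  have la: "swp l a" "\<forall>a\<in>set A. swp l a" using Cons.prems by auto
  obtain \<kappa>0 where k0: "\<kappa>0 \<noteq> 0" "eqv (mono (u @ [l, a] @ (A @ v))) (sm (cst p n \<kappa>0) (u @ [a, l] @ (A @ v)) :: 'k elt)"
    using swap[OF la(1), of u "A @ v"] Cons.prems by auto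
  obtain \<kappa>1 where k1: "\<kappa>1 \<noteq> 0" "eqv (mono ((u @ [a]) @ l # A @ v)) (sm (cst p n \<kappa>1) ((u @ [a]) @ A @ l # v) :: 'k elt)"
    using Cons.IH[OF la(2), of "u @ [a]"] Cons.prems by auto
  have "eqv (mono (u @ l # (a # A) @ v)) (sm (cst p n (\<kappa>0 * \<kappa>1)) (u @ (a # A) @ l # v) :: 'k elt)"
    using eqv_chain_cst[of "u @ [l, a] @ (A @ v)" \<kappa>0 "u @ [a, l] @ (A @ v)" \<kappa>1 "(u @ [a]) @ A @ l # v"] k0 k1
    by simp
  then show ?case using k0 k1 by (intro exI[where x = "\<kappa>0 * \<kappa>1"]) simp
qed

lemma bubble_rev: "\<forall>a\<in>set A. swp l a \<Longrightarrow> valid m (l # A) \<Longrightarrow> valid m u \<Longrightarrow> valid m v \<Longrightarrow>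
   \<exists>\<kappa>. \<kappa> \<noteq> 0 \<and> eqv (mono (u @ A @ l # v)) (sm (cst p n \<kappa>) (u @ l # A @ v) :: 'k::field_char_0 elt)"
proof -
  assume a: "\<forall>a\<in>set A. swp l a" "valid m (l # A)" "valid m u" "valid m v"
  obtain \<kappa> where k: "\<kappa> \<noteq> 0" "eqv (mono (u @ l # A @ v)) (sm (cst p n \<kappa>) (u @ A @ l # v) :: 'k elt)"
    using bubble[OF a] by blast
  show ?thesis using eqv_inv[OF k(2) k(1)] k(1) by (intro exI[where x = "inverse \<kappa>"]) simp
qed

lemma sortP:
  assumes P: "\<forall>l a. P l \<noteq> P a \<longrightarrow> fst l \<noteq> fst a"
  shows "normal w \<Longrightarrow> valid m w \<Longrightarrow> valid m u \<Longrightarrow> valid m v \<Longrightarrow>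
   \<exists>\<kappa>. \<kappa> \<noteq> 0 \<and> eqv (mono (u @ w @ v)) (sm (cst p n \<kappa>) (u @ filter P w @ filter (\<lambda>l. \<not> P l) w @ v) :: 'k::field_char_0 elt)"
proof (induction w arbitrary: u)
  case Nil
  have "eqv (mono (u @ v)) (sm (cst p n 1) (u @ v) :: 'k elt)"
    using Nil by (simp add: cst_1 eqv_refl mono_Fset)
  then show ?case by (intro exI[where x = "1::'k"]) simp
next
  case (Cons l w)
  have nw: "normal w" using Cons.prems(1) by (auto intro: normal_subset)
  obtain \<kappa>1 where k1: "\<kappa>1 \<noteq> 0" "eqv (mono ((u @ [l]) @ w @ v))
       (sm (cst p n \<kappa>1) ((u @ [l]) @ filter P w @ filter (\<lambda>l. \<not> P l) w @ v) :: 'k elt)"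
    using Cons.IH[OF nw, of "u @ [l]"] Cons.prems by auto
  show ?case
  proof (cases "P l")
    case True
    then show ?thesis using k1 by (intro exI[where x = "\<kappa>1"]) simp
  next
    case False
    have sw: "\<forall>a\<in>set (filter P w). swp l a"
    proof
      fix a assume a: "a \<in> set (filter P w)"
      then have "P a" "a \<in> set w" by auto
      then have "P l \<noteq> P a" using False by simp
      then have f: "fst l \<noteq> fst a" using P by blast
      have "snd l \<noteq> snd a"
      proof
        assume e: "snd l = snd a"
        obtain b i where li: "l = (b, i)" by (cases l)
        have "a = (\<not> b, i)" using f e li by (cases a) auto
        then show False using Cons.prems(1) li \<open>a \<in> set w\<close> by (cases b) (auto simp: normal_def)
      qed
      then show "swp l a" using f by (simp add: swp_def)
    qed
    have vl: "valid m (l # filter P w)" using Cons.prems by (auto simp: valid_def)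
    obtain \<kappa>2 where k2: "\<kappa>2 \<noteq> 0" "eqv (mono (u @ l # filter P w @ (filter (\<lambda>l. \<not> P l) w @ v)))
       (sm (cst p n \<kappa>2) (u @ filter P w @ l # (filter (\<lambda>l. \<not> P l) w @ v)) :: 'k elt)"
      using bubble[OF sw vl, of u "filter (\<lambda>l. \<not> P l) w @ v"] Cons.prems by (auto simp: valid_def)
    have "eqv (mono (u @ (l # w) @ v)) (sm (cst p n (\<kappa>1 * \<kappa>2)) (u @ filter P w @ l # (filter (\<lambda>l. \<not> P l) w @ v)) :: 'k elt)"
      using eqv_chain_cst[OF _ k2(2), of "u @ (l # w) @ v" \<kappa>1] k1 by simp
    then show ?thesis using False k1 k2 by (intro exI[where x = "\<kappa>1 * \<kappa>2"]) simp
  qed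
qed

end


lemma mset_filter_split: "mset (filter P w @ filter (\<lambda>l. \<not> P l) w) = mset w"
  by (metis multiset_partition mset_append mset_filter)

context rep begin

lemma caseA:
  assumes vw: "valid m (u @ [(b, i)] @ w @ [(\<not> b, i)] @ v)" and nw: "normal w"
    and ni: "\<forall>l\<in>set w. snd l \<noteq> i"
  shows "\<exists>r w'. r \<in> Rset p n \<and> eqv (mono (u @ [(b, i)] @ w @ [(\<not> b, i)] @ v)) (sm r w' :: 'k::field_char_0 elt)
     \<and> valid m w' \<and> length w' + 2 = length (u @ [(b, i)] @ w @ [(\<not> b, i)] @ v)
     \<and> wdeg w' = wdeg (u @ [(b, i)] @ w @ [(\<not> b, i)] @ v)"
proof -
  have vu: "valid m u" and vv: "valid m v" and vw': "valid m w" and i: "i \<in> {1..m}"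
    using vw by auto
  define P where "P = (if b then (\<lambda>l::letter. \<not> fst l) else (\<lambda>l. fst l))"
  define A where "A = filter P w"
  define B where "B = filter (\<lambda>l. \<not> P l) w"
  have P: "\<forall>l a. P l \<noteq> P a \<longrightarrow> fst l \<noteq> fst a" by (auto simp: P_def)
  have vA: "valid m A" and vB: "valid m B" using vw' by (auto simp: A_def B_def valid_def)
  have msAB: "mset (A @ B) = mset w" by (simp add: A_def B_def mset_filter_split del: mset_append)
  have lenAB: "length A + length B = length w" by (simp add: A_def B_def sum_length_filter_compl)
  obtain \<kappa>1 where k1: "\<kappa>1 \<noteq> 0" "eqv (mono ((u @ [(b, i)]) @ w @ ([(\<not> b, i)] @ v)))
      (sm (cst p n \<kappa>1) ((u @ [(b, i)]) @ A @ B @ ([(\<not> b, i)] @ v)) :: 'k elt)"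
    using sortP[OF P nw vw', of "u @ [(b, i)]" "[(\<not> b, i)] @ v"] vu vv i
    by (auto simp: A_def B_def)
  have swA: "\<forall>a\<in>set A. swp (b, i) a"
    using ni by (auto simp: A_def P_def swp_def split: if_splits)
  have swB: "\<forall>a\<in>set B. swp (\<not> b, i) a"
    using ni by (auto simp: B_def P_def swp_def split: if_splits)
  obtain \<kappa>2 where k2: "\<kappa>2 \<noteq> 0" "eqv (mono (u @ (b, i) # A @ (B @ [(\<not> b, i)] @ v)))
      (sm (cst p n \<kappa>2) (u @ A @ (b, i) # (B @ [(\<not> b, i)] @ v)) :: 'k elt)"
    using bubble[OF swA, of u "B @ [(\<not> b, i)] @ v"] vu vv vA vB i by auto
  obtain \<kappa>3 where k3: "\<kappa>3 \<noteq> 0" "eqv (mono ((u @ A @ [(b, i)]) @ B @ (\<not> b, i) # v))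
      (sm (cst p n \<kappa>3) ((u @ A @ [(b, i)]) @ (\<not> b, i) # B @ v) :: 'k elt)"
    using bubble_rev[OF swB, of "u @ A @ [(b, i)]" v] vu vv vA vB i by auto
  have e12: "eqv (mono (u @ [(b, i)] @ w @ [(\<not> b, i)] @ v))
      (sm (cst p n (\<kappa>1 * \<kappa>2)) (u @ A @ (b, i) # (B @ [(\<not> b, i)] @ v)) :: 'k elt)"
    using eqv_chain_cst[of "u @ [(b, i)] @ w @ [(\<not> b, i)] @ v" \<kappa>1 "u @ (b, i) # A @ (B @ [(\<not> b, i)] @ v)" \<kappa>2]
      k1 k2 by simp
  have e123: "eqv (mono (u @ [(b, i)] @ w @ [(\<not> b, i)] @ v))
      (sm (cst p n (\<kappa>1 * \<kappa>2 * \<kappa>3)) ((u @ A) @ [(b, i), (\<not> b, i)] @ (B @ v)) :: 'k elt)"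
    using eqv_chain_cst[OF e12, of \<kappa>3 "(u @ A) @ [(b, i), (\<not> b, i)] @ (B @ v)"] k3 by simp
  obtain r where r: "r \<in> Rset p n" "eqv (mono ((u @ A) @ [(b, i), (\<not> b, i)] @ (B @ v))) (sm r ((u @ A) @ (B @ v)) :: 'k elt)"
  proof (cases b)
    case True
    show ?thesis
      using that[OF sig_word_Rset[OF pc_Rset[OF tt_Rset]]] S2b[OF i, of "u @ A" "B @ v"] True vu vv vA vB
      by (simp add: sig_pc tt_Rset)
  next
    case False
    show ?thesis
      using that[OF sig_word_Rset[OF tt_Rset]] S2a[OF i, of "u @ A" "B @ v"] False vu vv vA vB
      by simp
  qed
  have e: "eqv (mono (u @ [(b, i)] @ w @ [(\<not> b, i)] @ v))
      (sm (\<lambda>x. cst p n (\<kappa>1 * \<kappa>2 * \<kappa>3) x * r x) ((u @ A) @ (B @ v)) :: 'k elt)"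
    by (rule eqv_chain[OF e123 r(2) cst_Rset r(1)])
  have rr: "(\<lambda>x. cst p n (\<kappa>1 * \<kappa>2 * \<kappa>3) x * r x) \<in> Rset p n" by (rule Rset_mul[OF cst_Rset r(1)])
  have "mset (u @ [(b, i)] @ w @ [(\<not> b, i)] @ v) = mset (((u @ A) @ (B @ v)) @ [(b, i), (\<not> b, i)])"
    using msAB by simp
  then have "wdeg (u @ [(b, i)] @ w @ [(\<not> b, i)] @ v) = wdeg (((u @ A) @ (B @ v)) @ [(b, i), (\<not> b, i)])"
    by (rule wdeg_mset)
  also have "\<dots> = wdeg ((u @ A) @ (B @ v))"
    by (cases b) (auto simp: wdeg_append wdeg_Cons ldeg_def intro!: ext)
  finally have wd: "wdeg ((u @ A) @ (B @ v)) = wdeg (u @ [(b, i)] @ w @ [(\<not> b, i)] @ v)" by simp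
  show ?thesis
    using e rr wd lenAB vu vv vA vB
    by (intro exI[where x = "\<lambda>x. cst p n (\<kappa>1 * \<kappa>2 * \<kappa>3) x * r x"] exI[where x = "(u @ A) @ (B @ v)"]) simp
qed

end


lemma normal_wdeg0: "normal w \<Longrightarrow> wdeg w = (\<lambda>i. 0) \<Longrightarrow> w = []"
proof (rule ccontr)
  assume nw: "normal w" and wd: "wdeg w = (\<lambda>i. 0)" and ne: "w \<noteq> []"
  obtain l w' where w: "w = l # w'" using ne by (cases w) auto
  obtain b i where l: "l = (b, i)" by (cases l)
  have "wdeg w i \<noteq> 0"
  proof (cases b)
    case True
    then have "(False, i) \<notin> set w" using nw w l by (auto simp: normal_def)
    then have "filter (\<lambda>l. l = (False, i)) w = []" by (auto simp: filter_empty_conv)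
    then have "length (filter (\<lambda>l. l = (False, i)) w) = 0" by simp
    moreover have "length (filter (\<lambda>l. l = (True, i)) w) > 0" using w l True by simp
    ultimately show ?thesis by (simp add: wdeg_def)
  next
    case False
    then have "(True, i) \<notin> set w" using nw w l by (auto simp: normal_def)
    then have "filter (\<lambda>l. l = (True, i)) w = []" by (auto simp: filter_empty_conv)
    then have "length (filter (\<lambda>l. l = (True, i)) w) = 0" by simp
    moreover have "length (filter (\<lambda>l. l = (False, i)) w) > 0" using w l False by simp
    ultimately show ?thesis by (simp add: wdeg_def)
  qed
  then show False using wd by simp
qed

context rep begin

lemma scal_NF: "d \<in> NF g \<Longrightarrow> r \<in> Rset p n \<Longrightarrow> Fmul p n \<gamma> (sm r []) d \<in> NF g"
proof -
  assume d: "d \<in> NF g" and r: "r \<in> Rset p n"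
  have dF: "d \<in> Fset p n m" using d by (simp add: NF_def)
  have F: "Fmul p n \<gamma> (sm r []) d \<in> Fset p n m" by (rule Fmul_Fset[OF sm_Fset[OF r] dF]) simp
  have "Fmul p n \<gamma> (sm r []) d w \<noteq> (\<lambda>v. 0) \<Longrightarrow> normal w \<and> wdeg w = g" for w
  proof -
    assume "Fmul p n \<gamma> (sm r []) d w \<noteq> (\<lambda>v. 0)"
    then have "d w \<noteq> (\<lambda>v. 0)" using dF by (auto simp: scal_mul)
    then show ?thesis using d by (simp add: NF_def)
  qed
  then show ?thesis using F by (simp add: NF_def)
qed

lemma add_NF: "d \<in> NF g \<Longrightarrow> e \<in> NF g \<Longrightarrow> Fadd d e \<in> NF g"
proof -
  assume d: "d \<in> NF g" and e: "e \<in> NF g"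
  have "Fadd d e w \<noteq> (\<lambda>v. 0) \<Longrightarrow> normal w \<and> wdeg w = g" for w
  proof -
    assume "Fadd d e w \<noteq> (\<lambda>v. 0)"
    then have "d w \<noteq> (\<lambda>v. 0) \<or> e w \<noteq> (\<lambda>v. 0)" by (auto simp: Fadd_def)
    then show ?thesis using d e by (auto simp: NF_def)
  qed
  then show ?thesis using d e by (simp add: NF_def Fadd_Fset)
qed

lemma Rgen: "valid m w \<Longrightarrow> \<exists>d. d \<in> (NF (wdeg w) :: 'k::field_char_0 elt set) \<and> eqv (mono w) d"
proof (induction "length w" arbitrary: w rule: less_induct)
  case less
  show ?case
  proof (cases "normal w")
    case True
    have "mono w \<in> (Fset p n m :: 'k elt set)" using less.prems by (rule mono_Fset)
    then have "mono w \<in> (NF (wdeg w) :: 'k elt set)"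
      using True by (auto simp: NF_def sm_def)
    then show ?thesis using less.prems by (intro exI[where x = "mono w"]) (simp add: eqv_refl mono_Fset)
  next
    case False
    then obtain u b i x v where w: "w = u @ [(b, i)] @ x @ [(\<not> b, i)] @ v" and nx: "normal x"
      and ni: "\<forall>l\<in>set x. snd l \<noteq> i"
      using closest by blast
    obtain r w' where r: "r \<in> Rset p n" and e: "eqv (mono w) (sm r w' :: 'k elt)" and vw': "valid m w'"
      and len: "length w' + 2 = length w" and wd: "wdeg w' = wdeg w"
      using caseA[OF _ nx ni, of u b v] less.prems w by blast
    obtain d' where d': "d' \<in> (NF (wdeg w') :: 'k elt set)" "eqv (mono w') d'"
      using less.hyps[of w'] len vw' by auto
    have "eqv (Fmul p n \<gamma> (sm r []) (mono w')) (Fmul p n \<gamma> (sm r []) d')"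
      by (rule eqv_lmul[OF sm_Fset[OF r] d'(2)]) simp
    then have "eqv (sm r w') (Fmul p n \<gamma> (sm r []) d')"
      using r by (simp add: sm_mono Rset_mul_oneR)
    then have "eqv (mono w) (Fmul p n \<gamma> (sm r []) d')" using e eqv_trans by blast
    moreover have "Fmul p n \<gamma> (sm r []) d' \<in> NF (wdeg w)" using scal_NF[OF d'(1) r] wd by simp
    ultimately show ?thesis by blast
  qed
qed

lemma Fset_upd: "c \<in> Fset p n m \<Longrightarrow> c(w := (\<lambda>v. 0)) \<in> Fset p n m"
proof -
  assume c: "c \<in> Fset p n m"
  have "{w'. (c(w := (\<lambda>v. 0))) w' \<noteq> (\<lambda>v. 0)} \<subseteq> {w'. c w' \<noteq> (\<lambda>v. 0)}" by auto
  then show ?thesis using c by (auto simp: Fset_def Rset_zero intro: finite_subset)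
qed

lemma Fset_induct:
  assumes c: "c \<in> Fset p n m"
    and base: "\<And>c. c \<in> Fset p n m \<Longrightarrow> supp c = {} \<Longrightarrow> P c"
    and step: "\<And>c w. c \<in> Fset p n m \<Longrightarrow> w \<in> supp c \<Longrightarrow> P (c(w := (\<lambda>v. 0))) \<Longrightarrow> P c"
  shows "P (c :: 'k::field elt)"
proof -
  have "\<forall>c. c \<in> Fset p n m \<longrightarrow> card (supp c) = N \<longrightarrow> P (c :: 'k elt)" for N
  proof (induction N)
    case 0
    show ?case
    proof (intro allI impI)
      fix c :: "'k elt" assume c: "c \<in> Fset p n m" "card (supp c) = 0"
      then have "supp c = {}" using Fset_finite[OF c(1)] by (metis card_0_eq)
      then show "P c" using base c by blast
    qed
  next
    case (Suc N)
    show ?case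
    proof (intro allI impI)
      fix c :: "'k elt" assume c: "c \<in> Fset p n m" "card (supp c) = Suc N"
      then obtain w where w: "w \<in> supp c" by (metis card.empty card_gt_0_iff zero_less_Suc ex_in_conv)
      have "supp (c(w := (\<lambda>v. 0))) = supp c - {w}" by (auto simp: supp_def)
      then have "card (supp (c(w := (\<lambda>v. 0)))) = N" using c w Fset_finite by simp
      then have "P (c(w := (\<lambda>v. 0)))" using Suc Fset_upd[OF c(1)] by blast
      then show "P c" using step c w by blast
    qed
  qed
  then show ?thesis using c by blast
qed

lemma Fhom_NF: "c \<in> Fhom p n m g \<Longrightarrow> \<exists>d. d \<in> (NF g :: 'k::field_char_0 elt set) \<and> eqv c d"
proof -
  assume ch: "c \<in> Fhom p n m g"
  have cF: "c \<in> Fset p n m" using ch by (simp add: Fhom_def)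
  have "c \<in> Fhom p n m g \<longrightarrow> (\<exists>d. d \<in> (NF g :: 'k elt set) \<and> eqv c d)"
  proof (rule Fset_induct[OF cF])
    fix c :: "'k elt" assume c: "c \<in> Fset p n m" "supp c = {}"
    then have "c = Fzero" by (auto simp: supp_def Fzero_def fun_eq_iff)
    moreover have "Fzero \<in> (NF g :: 'k elt set)" using Fzero_Fset by (simp add: NF_def Fzero_def)
    ultimately show "c \<in> Fhom p n m g \<longrightarrow> (\<exists>d. d \<in> NF g \<and> eqv c d)"
      using c by (auto intro: eqv_refl)
  next
    fix c :: "'k elt" and w
    assume c: "c \<in> Fset p n m" and w: "w \<in> supp c"
      and IH: "c(w := (\<lambda>v. 0)) \<in> Fhom p n m g \<longrightarrow> (\<exists>d. d \<in> NF g \<and> eqv (c(w := (\<lambda>v. 0))) d)"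
    show "c \<in> Fhom p n m g \<longrightarrow> (\<exists>d. d \<in> NF g \<and> eqv c d)"
    proof
      assume ch: "c \<in> Fhom p n m g"
      have "c(w := (\<lambda>v. 0)) \<in> Fhom p n m g" using ch Fset_upd[OF c] by (auto simp: Fhom_def)
      then obtain d' where d': "d' \<in> NF g" "eqv (c(w := (\<lambda>v. 0))) d'" using IH by blast
      have cw: "c w \<noteq> (\<lambda>v. 0)" using w by (simp add: supp_def)
      then have vw: "valid m w" and wd: "wdeg w = g" using c ch by (auto simp: Fset_def Fhom_def valid_def)
      have cR: "c w \<in> Rset p n" using c by (simp add: Fset_def)
      obtain d1 where d1: "d1 \<in> (NF (wdeg w) :: 'k elt set)" "eqv (mono w) d1" using Rgen[OF vw] by blast
      have "eqv (Fmul p n \<gamma> (sm (c w) []) (mono w)) (Fmul p n \<gamma> (sm (c w) []) d1)"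
        by (rule eqv_lmul[OF sm_Fset[OF cR] d1(2)]) simp
      then have e1: "eqv (sm (c w) w) (Fmul p n \<gamma> (sm (c w) []) d1)"
        using cR by (simp add: sm_mono Rset_mul_oneR)
      have "c = Fadd (sm (c w) w) (c(w := (\<lambda>v. 0)))" by (auto simp: Fadd_def sm_def fun_eq_iff)
      then have "eqv c (Fadd (Fmul p n \<gamma> (sm (c w) []) d1) d')"
        using eqv_add[OF e1 d'(2)] by simp
      moreover have "Fadd (Fmul p n \<gamma> (sm (c w) []) d1) d' \<in> NF g"
        using add_NF[OF scal_NF[OF d1(1) cR, unfolded wd] d'(1)] by simp
      ultimately show "\<exists>d. d \<in> NF g \<and> eqv c d" by blast
    qed
  qed
  then show ?thesis using ch by blast
qed

lemma Fhom0_red: "c \<in> Fhom p n m (\<lambda>i. 0) \<Longrightarrow> \<exists>r. r \<in> Rset p n \<and> eqv c (sm r [] :: 'k::field_char_0 elt)"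
proof -
  assume c: "c \<in> Fhom p n m (\<lambda>i. 0)"
  obtain d where d: "d \<in> (NF (\<lambda>i. 0) :: 'k elt set)" "eqv c d" using Fhom_NF[OF c] by blast
  have "d = sm (d []) []"
  proof (rule ext)
    fix w show "d w = sm (d []) [] w"
    proof (cases "d w = (\<lambda>v. 0)")
      case False
      then have "w = []" using d(1) normal_wdeg0 by (auto simp: NF_def)
      then show ?thesis by (simp add: sm_def)
    next
      case True
      then show ?thesis by (auto simp: sm_def)
    qed
  qed
  moreover have "d [] \<in> Rset p n" using d(1) by (simp add: NF_def Fset_def)
  ultimately show ?thesis using d(2) by metis
qed

end


fun okst :: "bool \<Rightarrow> int list \<Rightarrow> bool" where
  "okst s [] = True"
| "okst s (e # es) = (if e = 0 then okst s es else if e = 1 then (\<not> s \<and> okst True es)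
                      else if e = -1 then (s \<and> okst False es) else False)"

fun fin :: "bool \<Rightarrow> int list \<Rightarrow> bool" where
  "fin s [] = s"
| "fin s (e # es) = fin (if e = 1 then True else if e = -1 then False else s) es"

fun fnz :: "int list \<Rightarrow> int" where
  "fnz [] = 0"
| "fnz (e # es) = (if e = 0 then fnz es else e)"

lemma okst_append: "okst s (a @ b) \<longleftrightarrow> okst s a \<and> okst (fin s a) b"
  by (induction a arbitrary: s) auto

lemma fin_append: "fin s (a @ b) = fin (fin s a) b"
  by (induction a arbitrary: s) auto

lemma okst_rev: "okst s es \<Longrightarrow> okst (fin s es) (rev (map uminus es)) \<and> fin (fin s es) (rev (map uminus es)) = s"
proof (induction es arbitrary: s)
  case Nil then show ?case by simp
next
  case (Cons e es)
  let ?s1 = "if e = 1 then True else if e = -1 then False else s"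
  have o: "okst ?s1 es" using Cons.prems by (auto split: if_splits)
  from Cons.IH[OF o] have ih: "okst (fin ?s1 es) (rev (map uminus es))" "fin (fin ?s1 es) (rev (map uminus es)) = ?s1" by auto
  have e: "e = 0 \<or> e = 1 \<or> e = -1" using Cons.prems by (auto split: if_splits)
  show ?case using ih e Cons.prems by (auto simp: okst_append fin_append)
qed

lemma bad_shift: "no_bad_block (e # es) \<Longrightarrow> no_bad_block es"
proof -
  assume nb: "no_bad_block (e # es)"
  show "no_bad_block es"
    unfolding no_bad_block_def
  proof
    assume "\<exists>k l. k < l \<and> l < length es \<and> es ! k = es ! l \<and> (es ! k = 1 \<or> es ! k = -1) \<and> (\<forall>j. k < j \<and> j < l \<longrightarrow> es ! j = 0)"
    then obtain k l where kl: "k < l" "l < length es" "es ! k = es ! l" "es ! k = 1 \<or> es ! k = -1"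
      "\<forall>j. k < j \<and> j < l \<longrightarrow> es ! j = 0" by blast
    have "\<forall>j. Suc k < j \<and> j < Suc l \<longrightarrow> (e # es) ! j = 0"
    proof (intro allI impI)
      fix j assume j: "Suc k < j \<and> j < Suc l"
      then obtain j' where "j = Suc j'" by (cases j) auto
      then show "(e # es) ! j = 0" using j kl(5) by auto
    qed
    then show False using nb kl unfolding no_bad_block_def
      by (metis Suc_mono length_Cons nth_Cons_Suc)
  qed
qed

lemma fnz_pos: "fnz es = e \<Longrightarrow> e \<noteq> 0 \<Longrightarrow> \<exists>j<length es. es ! j = e \<and> (\<forall>i<j. es ! i = 0)"
proof (induction es)
  case Nil then show ?case by simp
next
  case (Cons x es)
  show ?case
  proof (cases "x = 0")
    case True
    then obtain j where j: "j < length es" "es ! j = e" "\<forall>i<j. es ! i = 0" using Cons by auto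
    have "\<forall>i<Suc j. (x # es) ! i = 0"
    proof (intro allI impI)
      fix i assume "i < Suc j" then show "(x # es) ! i = 0" using j True by (cases i) auto
    qed
    then show ?thesis using j by (intro exI[where x = "Suc j"]) auto
  next
    case False
    then show ?thesis using Cons.prems by (intro exI[where x = 0]) auto
  qed
qed

lemma nb_head: "no_bad_block (e # es) \<Longrightarrow> (e = 1 \<or> e = -1) \<Longrightarrow> fnz es \<noteq> e"
proof
  assume nb: "no_bad_block (e # es)" and e: "e = 1 \<or> e = -1" and f: "fnz es = e"
  obtain j where j: "j < length es" "es ! j = e" "\<forall>i<j. es ! i = 0" using fnz_pos[OF f] e by auto
  have "\<forall>i. 0 < i \<and> i < Suc j \<longrightarrow> (e # es) ! i = 0"
  proof (intro allI impI)
    fix i assume "0 < i \<and> i < Suc j" then show "(e # es) ! i = 0" using j by (cases i) auto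
  qed
  then show False using nb j e unfolding no_bad_block_def
    by (metis length_Cons not_less_eq nth_Cons_0 nth_Cons_Suc zero_less_Suc)
qed

lemma okst_zero: "fnz es = 0 \<Longrightarrow> okst s es"
  by (induction es) (auto split: if_splits)

lemma okst_exists: "no_bad_block es \<Longrightarrow> (\<forall>e\<in>set es. e = 0 \<or> e = 1 \<or> e = -1) \<Longrightarrow> okst (fnz es = -1) es"
proof (induction es)
  case Nil then show ?case by simp
next
  case (Cons e es)
  have ih: "okst (fnz es = -1) es" using Cons bad_shift by auto
  have f: "fnz es = 0 \<or> fnz es = 1 \<or> fnz es = -1"
  proof -
    have "fnz es \<in> set es \<or> fnz es = 0" by (induction es) auto
    then show ?thesis using Cons.prems(2) by auto
  qed
  consider "e = 0" | "e = 1" | "e = -1" using Cons.prems(2) by auto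
  then show ?case
  proof cases
    case 1 then show ?thesis using ih by simp
  next
    case 2
    then have "fnz es \<noteq> 1" using nb_head[OF Cons.prems(1)] by auto
    then have "okst True es" using ih f okst_zero by auto
    then show ?thesis using 2 by simp
  next
    case 3
    then have "fnz es \<noteq> -1" using nb_head[OF Cons.prems(1)] by auto
    then have "okst False es" using ih f okst_zero by auto
    then show ?thesis using 3 by simp
  qed
qed

lemma okst_block: "okst s es \<Longrightarrow> j < length es \<Longrightarrow> (\<forall>i<j. es ! i = 0) \<Longrightarrow>
   (es ! j = 1 \<longrightarrow> \<not> s) \<and> (es ! j = -1 \<longrightarrow> s)"
proof (induction es arbitrary: j)
  case Nil then show ?case by simp
next
  case (Cons e es)
  show ?case
  proof (cases j)
    case 0 then show ?thesis using Cons.prems by (auto split: if_splits)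
  next
    case (Suc j')
    have e0: "e = 0" using Cons.prems(3) Suc by auto
    have "\<forall>i<j'. es ! i = 0" using Cons.prems(3) Suc by auto
    then show ?thesis using Cons.IH[of j'] Cons.prems e0 Suc by auto
  qed
qed

lemma okst_nb: "okst s es \<Longrightarrow> no_bad_block es"
proof (induction es arbitrary: s)
  case Nil then show ?case by (simp add: no_bad_block_def)
next
  case (Cons e es)
  let ?s1 = "if e = 1 then True else if e = -1 then False else s"
  have o: "okst ?s1 es" using Cons.prems by (auto split: if_splits)
  have nb: "no_bad_block es" using Cons.IH[OF o] .
  show ?case
    unfolding no_bad_block_def
  proof
    assume "\<exists>k l. k < l \<and> l < length (e # es) \<and> (e # es) ! k = (e # es) ! l \<and> ((e # es) ! k = 1 \<or> (e # es) ! k = -1) \<and> (\<forall>j. k < j \<and> j < l \<longrightarrow> (e # es) ! j = 0)"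
    then obtain k l where kl: "k < l" "l < length (e # es)" "(e # es) ! k = (e # es) ! l"
      "(e # es) ! k = 1 \<or> (e # es) ! k = -1" "\<forall>j. k < j \<and> j < l \<longrightarrow> (e # es) ! j = 0" by blast
    obtain l' where l': "l = Suc l'" using kl(1) by (cases l) auto
    show False
    proof (cases k)
      case 0
      have z: "\<forall>i<l'. es ! i = 0" using kl(5) 0 l' by (metis Suc_mono nth_Cons_Suc zero_less_Suc)
      have "l' < length es" using kl(2) l' by simp
      from okst_block[OF o this z] show False using kl 0 l' by auto
    next
      case (Suc k')
      have "k' < l'" "l' < length es" "es ! k' = es ! l'" "es ! k' = 1 \<or> es ! k' = -1"
        using kl Suc l' by auto
      moreover have "\<forall>j. k' < j \<and> j < l' \<longrightarrow> es ! j = 0"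
        using kl(5) Suc l' by (metis Suc_mono nth_Cons_Suc)
      ultimately show False using nb unfolding no_bad_block_def by blast
    qed
  qed
qed


definition ent :: "(nat \<Rightarrow> nat \<Rightarrow> int) \<Rightarrow> nat \<Rightarrow> letter list \<Rightarrow> int list" where
  "ent \<gamma> r w = map (\<lambda>l. if fst l then \<gamma> r (snd l) else - \<gamma> r (snd l)) w"

lemma ent_Nil[simp]: "ent \<gamma> r [] = []" by (simp add: ent_def)
lemma ent_Cons[simp]: "ent \<gamma> r (l # w) = (if fst l then \<gamma> r (snd l) else - \<gamma> r (snd l)) # ent \<gamma> r w"
  by (simp add: ent_def)

context rep begin

lemma odd_step:
  assumes r: "p < r" "r \<le> n" and x: "x = 0 \<or> x = 1" and c: "c = 0 \<or> c = 1 \<or> c = -1"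
  shows "(if b then aco r c x else bco r c x) \<noteq> (0::'k::field_char_0) \<longleftrightarrow>
         ((if b then c else - c) = 0 \<or> ((if b then c else - c) = 1 \<and> x = 0) \<or> ((if b then c else - c) = -1 \<and> x = 1))"
  using r x c apply (cases b) apply (auto simp: aco_def bco_def)
  done

lemma odd_move:
  assumes r: "p < r" "r \<le> n" and x: "x = 0 \<or> x = 1" and c: "c = 0 \<or> c = 1 \<or> c = -1"
  shows "(shiftc p r (if b then c else - c) x = (1::'k::field_char_0)) \<longleftrightarrow>
     (if (if b then c else - c) = 0 then x = 1 else x = 0)"
  using r x c apply (cases b) apply (auto simp: shiftc_def)
  done

lemma W1: "valid m w \<Longrightarrow> y \<in> V \<Longrightarrow> Wt w y h \<noteq> (0::'k::field_char_0) \<Longrightarrow> r \<in> {p<..n} \<Longrightarrow>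
   okst (y r = 1) (ent \<gamma> r w)"
proof (induction w arbitrary: y h)
  case Nil then show ?case by simp
next
  case (Cons l u)
  obtain b i where l: "l = (b, i)" by (cases l)
  have i: "i \<in> {1..m}" using Cons.prems(1) l by simp
  have r: "p < r" "r \<le> n" using Cons.prems(4) by auto
  have x: "y r = 0 \<or> y r = 1" using odd_V[OF Cons.prems(2) r] .
  have c: "\<gamma> r i = 0 \<or> \<gamma> r i = 1 \<or> \<gamma> r i = -1" using gam_bound[OF r i] .
  have w1: "wt l y h \<noteq> 0" and w2: "Wt u (mv l y) (\<lambda>j. h j - ldeg l j) \<noteq> 0" using Cons.prems(3) by auto
  have "co l r (y r) \<noteq> 0"
    using w1 Cons.prems(2) r by (auto simp: wt_in)
  then have "co (b, i) r (y r) \<noteq> 0" using l by simp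
  then have h1: "(if b then aco r (\<gamma> r i) (y r) else bco r (\<gamma> r i) (y r)) \<noteq> 0"
    by (simp add: co_def cong: if_cong)
  have ih: "okst (mv l y r = 1) (ent \<gamma> r u)"
    using Cons.IH[OF _ mv_V[OF Cons.prems(2)] w2 Cons.prems(4)] Cons.prems(1) by simp
  have mvr: "mv l y r = shiftc p r (if b then \<gamma> r i else - \<gamma> r i) (y r)"
    using r l by (simp add: mv_coord)
  define e where "e = (if b then \<gamma> r i else - \<gamma> r i)"
  have ee: "e = 0 \<or> e = 1 \<or> e = -1" using c by (auto simp: e_def)
  have hd: "e = 0 \<or> (e = 1 \<and> y r = 0) \<or> (e = -1 \<and> y r = 1)"
    using odd_step[OF r x c, of b] h1 by (simp add: e_def)
  have mv1: "(mv l y r = 1) = (if e = 0 then y r = 1 else y r = 0)"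
    using odd_move[OF r x c, of b] mvr by (simp add: e_def)
  have ok: "okst (y r = 1) (e # ent \<gamma> r u)"
    using ee hd ih mv1 by auto
  have eq: "ent \<gamma> r (l # u) = e # ent \<gamma> r u" using l by (simp add: e_def)
  show ?case unfolding eq by (rule ok)
qed

lemma nonint_shift: "(\<forall>z::int. x \<noteq> of_int z) \<Longrightarrow> (\<forall>z::int. x - of_int c \<noteq> (of_int z :: 'k::field))"
proof (intro allI)
  fix z assume a: "\<forall>z::int. x \<noteq> of_int z"
  show "x - of_int c \<noteq> of_int z"
  proof
    assume "x - of_int c = of_int z"
    then have "x = of_int (z + c)" by (simp add: algebra_simps)
    then show False using a by blast
  qed
qed

lemma even_nz: "j \<le> p \<Longrightarrow> (\<forall>z::int. x \<noteq> of_int z) \<Longrightarrow> aco j c x \<noteq> (0::'k::field_char_0) \<and> bco j c x \<noteq> 0"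
proof -
  assume j: "j \<le> p" and a: "\<forall>z::int. x \<noteq> of_int z"
  have "pochhammer x k \<noteq> 0" for k
  proof
    assume "pochhammer x k = 0"
    then obtain k' where "x = - of_nat k'" by (auto simp: pochhammer_eq_0_iff)
    then have "x = of_int (- int k')" by simp
    then show False using a by blast
  qed
  then show ?thesis using j by (simp add: aco_def bco_def)
qed

lemma W3: "valid m u \<Longrightarrow> y \<in> V \<Longrightarrow> (\<forall>j. 1 \<le> j \<and> j \<le> p \<longrightarrow> (\<forall>z::int. y j \<noteq> of_int z)) \<Longrightarrow>
   (\<forall>r\<in>{p<..n}. okst (y r = 1) (ent \<gamma> r u)) \<Longrightarrow> Wt u y h \<noteq> (0::'k::field_char_0)"
proof (induction u arbitrary: y h)
  case Nil then show ?case by simp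
next
  case (Cons l u)
  obtain b i where l: "l = (b, i)" by (cases l)
  have i: "i \<in> {1..m}" using Cons.prems(1) l by simp
  have fac: "co l j (y j) \<noteq> 0" if j: "j \<in> {1..n}" for j
  proof (cases "j \<le> p")
    case True
    then show ?thesis using even_nz[OF True, of "y j"] Cons.prems(3) j by (auto simp: co_def)
  next
    case False
    then have r: "p < j" "j \<le> n" using j by auto
    have x: "y j = 0 \<or> y j = 1" using odd_V[OF Cons.prems(2) r] .
    have c: "\<gamma> j i = 0 \<or> \<gamma> j i = 1 \<or> \<gamma> j i = -1" using gam_bound[OF r i] .
    define e where "e = (if b then \<gamma> j i else - \<gamma> j i)"
    have eq: "ent \<gamma> j (l # u) = e # ent \<gamma> j u" using l by (simp add: e_def)
    have ok0: "okst (y j = 1) (ent \<gamma> j (l # u))" by (rule bspec[OF Cons.prems(4)]) (use r in simp)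
    have ok: "okst (y j = 1) (e # ent \<gamma> j u)" using ok0 unfolding eq .
    have ee: "e = 0 \<or> e = 1 \<or> e = -1" using c by (auto simp: e_def)
    have hd: "e = 0 \<or> (e = 1 \<and> y j = 0) \<or> (e = -1 \<and> y j = 1)"
      using ee ok x by (auto split: if_splits)
    have "(if b then aco j (\<gamma> j i) (y j) else bco j (\<gamma> j i) (y j)) \<noteq> 0"
      using odd_step[OF r x c, of b] hd by (simp add: e_def)
    then show ?thesis using l by (simp add: co_def cong: if_cong)
  qed
  have w1: "wt l y h \<noteq> 0"
    using fac Cons.prems(2) by (simp add: wt_in eps_def)
  have my: "mv l y \<in> V" using mv_V[OF Cons.prems(2)] .
  have ev: "\<forall>j. 1 \<le> j \<and> j \<le> p \<longrightarrow> (\<forall>z::int. mv l y j \<noteq> of_int z)"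
  proof (rule allI, rule impI)
    fix j assume j: "1 \<le> j \<and> j \<le> p"
    then have "mv l y j = y j - of_int (lcol \<gamma> l j)" using pn by (simp add: mv_coord shiftc_def)
    then show "\<forall>z::int. mv l y j \<noteq> of_int z" using nonint_shift Cons.prems(3) j by metis
  qed
  have od: "\<forall>r\<in>{p<..n}. okst (mv l y r = 1) (ent \<gamma> r u)"
  proof
    fix r assume rr: "r \<in> {p<..n}"
    then have r: "p < r" "r \<le> n" by auto
    have x: "y r = 0 \<or> y r = 1" using odd_V[OF Cons.prems(2) r] .
    have c: "\<gamma> r i = 0 \<or> \<gamma> r i = 1 \<or> \<gamma> r i = -1" using gam_bound[OF r i] .
    define e where "e = (if b then \<gamma> r i else - \<gamma> r i)"
    have eq: "ent \<gamma> r (l # u) = e # ent \<gamma> r u" using l by (simp add: e_def)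
    have ok0: "okst (y r = 1) (ent \<gamma> r (l # u))" by (rule bspec[OF Cons.prems(4) rr])
    have ok: "okst (y r = 1) (e # ent \<gamma> r u)" using ok0 unfolding eq .
    have ee: "e = 0 \<or> e = 1 \<or> e = -1" using c by (auto simp: e_def)
    have mvr: "mv l y r = shiftc p r e (y r)"
      using r l by (simp add: mv_coord e_def)
    have mv1: "(mv l y r = 1) = (if e = 0 then y r = 1 else y r = 0)"
      using odd_move[OF r x c, of b] mvr by (simp add: e_def)
    show "okst (mv l y r = 1) (ent \<gamma> r u)"
      using ee ok mv1 x by (auto split: if_splits)
  qed
  have w2: "Wt u (mv l y) (\<lambda>j. h j - ldeg l j) \<noteq> 0"
    using Cons.IH[OF _ my ev od] Cons.prems(1) by simp
  show ?case using w1 w2 by simp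
qed

end


lemma cnt_snd: "count (mset (map snd w)) i = count (mset w) (True, i) + count (mset w) (False, i)"
  by (induction w) auto

lemma wdeg_count: "wdeg w i = int (count (mset w) (True, i)) - int (count (mset w) (False, i))"
proof -
  have "length (filter (\<lambda>l. l = x) w) = count (mset w) x" for x by (induction w) auto
  then show ?thesis by (simp add: wdeg_def)
qed

lemma flip_wdeg: "wdeg (rev (map (\<lambda>l. (\<not> fst l, snd l)) w)) = (\<lambda>j. - wdeg w j)"
proof (rule ext)
  fix j
  have "count (mset (rev (map (\<lambda>l. (\<not> fst l, snd l)) w))) (b, j) = count (mset w) (\<not> b, j)" for b
    by (induction w) auto
  then show "wdeg (rev (map (\<lambda>l. (\<not> fst l, snd l)) w)) j = - wdeg w j"
    by (simp add: wdeg_count)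
qed

lemma flip_ent: "ent \<gamma> r (rev (map (\<lambda>l. (\<not> fst l, snd l)) w)) = rev (map uminus (ent \<gamma> r w))"
  by (simp add: ent_def rev_map)

lemma half_nonint: "(\<forall>z::int. (1/2 :: 'k::field_char_0) \<noteq> of_int z)"
proof
  fix z :: int
  show "(1/2 :: 'k) \<noteq> of_int z"
  proof
    assume "(1/2 :: 'k) = of_int z"
    then have "(of_int (2 * z) :: 'k) = of_int 1" by (simp add: field_simps)
    then have "2 * z = 1" by (simp only: of_int_eq_iff)
    then show False by presburger
  qed
qed

context rep begin

definition K0 :: "'k::field_char_0 elt set" where
  "K0 = {c \<in> Fset p n m. \<forall>f y h. Phi c f y h = 0}"

lemma supp_Fneg: "supp (Fneg a) = supp a"
  by (auto simp: supp_def Fneg_def fun_eq_iff)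

lemma Phi_neg: "Phi (Fneg a) f y h = - Phi a f y h"
  unfolding Phi_def supp_Fneg by (simp add: Fneg_def sum_negf)

lemma Phi_eqv: "eqv c d \<Longrightarrow> Phi c f y h = (Phi d f y h :: 'k::field_char_0)"
proof -
  assume e: "eqv c d"
  then have "Phi (Fadd c (Fneg d)) f y h = 0" by (simp add: eqv_def Jgen_prop)
  then show ?thesis using e by (simp add: Phi_add Fneg_Fset eqv_def Phi_neg)
qed

lemma hcomp_Fset: "c \<in> Fset p n m \<Longrightarrow> hcomp g c \<in> Fset p n m"
proof -
  assume c: "c \<in> Fset p n m"
  have "{w. hcomp g c w \<noteq> (\<lambda>v. 0)} \<subseteq> {w. c w \<noteq> (\<lambda>v. 0)}" by (auto simp: hcomp_def)
  then show ?thesis using c by (auto simp: Fset_def hcomp_def Rset_zero intro: finite_subset)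
qed

lemma Phi_hcomp: "c \<in> Fset p n m \<Longrightarrow> (\<forall>f y h. Phi c f y h = 0) \<Longrightarrow> Phi (hcomp g c) f y h = 0"
proof -
  assume c: "c \<in> Fset p n m" and z: "\<forall>f y h. Phi c f y h = 0"
  define f' where "f' = (\<lambda>y' h'. if h' = (\<lambda>j. h j - g j) then f y' h' else 0)"
  have s: "supp (hcomp g c) \<subseteq> supp c" by (auto simp: supp_def hcomp_def)
  have "Phi (hcomp g c) f y h = (\<Sum>w\<in>supp c. hcomp g c w y * Phiw w f y h)"
    by (rule Phi_superset[OF Fset_finite[OF c] s])
  also have "\<dots> = (\<Sum>w\<in>supp c. c w y * Phiw w f' y h)"
  proof (rule sum.cong[OF refl])
    fix w
    show "hcomp g c w y * Phiw w f y h = c w y * Phiw w f' y h"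
    proof (cases "wdeg w = g")
      case True then show ?thesis by (simp add: hcomp_def Phiw_def f'_def)
    next
      case False
      then have "(\<lambda>j. h j - wdeg w j) \<noteq> (\<lambda>j. h j - g j)" by (auto simp: fun_eq_iff)
      then show ?thesis using False by (simp add: hcomp_def Phiw_def f'_def)
    qed
  qed
  also have "\<dots> = Phi c f' y h" by (simp add: Phi_def)
  finally show ?thesis using z by simp
qed

lemma K0_admissible: "admissible p n m \<gamma> (K0 :: 'k::field_char_0 elt set)"
proof -
  have gi: "graded_ideal p n m \<gamma> (K0 :: 'k elt set)"
    unfolding graded_ideal_def
  proof (intro conjI ballI allI)
    show "K0 \<subseteq> Fset p n m" by (auto simp: K0_def)
    show "Fzero \<in> (K0 :: 'k elt set)" by (simp add: K0_def Fzero_Fset Phi_Fzero)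
  next
    fix a b :: "'k elt" assume a: "a \<in> K0" and b: "b \<in> K0"
    then show "Fadd a b \<in> K0" by (simp add: K0_def Fadd_Fset Phi_add)
  next
    fix c a :: "'k elt" assume c: "c \<in> Fset p n m" and a: "a \<in> K0"
    have a0: "Phi a f = (\<lambda>y h. 0)" for f using a by (auto simp: K0_def intro!: ext)
    show "Fmul p n \<gamma> c a \<in> K0" using c a a0 by (simp add: K0_def Fmul_Fset Phi_mul Phi_zerof)
    show "Fmul p n \<gamma> a c \<in> K0" using c a by (simp add: K0_def Fmul_Fset Phi_mul)
  next
    fix a :: "'k elt" and g assume a: "a \<in> K0"
    then show "hcomp g a \<in> K0" by (simp add: K0_def hcomp_Fset Phi_hcomp)
  qed
  have J: "Jgen p n m \<gamma> \<subseteq> (K0 :: 'k elt set)" using Jgen_prop by (auto simp: K0_def)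
  have Z: "K0 \<inter> Fhom p n m (\<lambda>i. 0) \<subseteq> (Jgen p n m \<gamma> :: 'k elt set)"
  proof
    fix c :: "'k elt" assume "c \<in> K0 \<inter> Fhom p n m (\<lambda>i. 0)"
    then have cK: "c \<in> K0" and ch: "c \<in> Fhom p n m (\<lambda>i. 0)" by auto
    obtain r where r: "r \<in> Rset p n" "eqv c (sm r [])" using Fhom0_red[OF ch] by blast
    have "Phi (sm r []) (\<lambda>y h. 1) y (\<lambda>j. 0) = 0" for y
      using Phi_eqv[OF r(2)] cK by (simp add: K0_def)
    then have "r y = 0" for y by (simp add: Phi_sm)
    then have "sm r [] = Fzero" by (auto simp: sm_def Fzero_def fun_eq_iff)
    then have "Fadd c (Fneg Fzero) \<in> Jgen p n m \<gamma>" using r(2) by (simp add: eqv_def)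
    moreover have "Fadd c (Fneg Fzero) = c" by (simp add: Fadd_def Fneg_def Fzero_def)
    ultimately show "c \<in> Jgen p n m \<gamma>" by simp
  qed
  show ?thesis using gi J Z by (simp add: admissible_def)
qed

lemma K0_Imax: "(K0 :: 'k::field_char_0 elt set) \<subseteq> Imax p n m \<gamma>"
  using K0_admissible by (auto simp: Imax_def)

end


definition good :: "nat \<Rightarrow> nat \<Rightarrow> nat \<Rightarrow> (nat \<Rightarrow> nat \<Rightarrow> int) \<Rightarrow> (nat \<Rightarrow> int) \<Rightarrow> nat list \<Rightarrow> bool" where
  "good p n m \<gamma> g s \<longleftrightarrow> set s \<subseteq> {1..m} \<and> (\<forall>i\<in>{1..m}. count (mset s) i = nat \<bar>g i\<bar>) \<and>
       (\<forall>r\<in>{p<..n}. no_bad_block (map (\<lambda>i. sgn (g i) * \<gamma> r i) s))"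

lemma cnt_map: "count (mset (map (\<lambda>i. (0 < g i, i)) s)) (b, j) = (if (0 < g j) = b then count (mset s) j else 0)"
  by (induction s) auto

context rep begin

lemma G1: "normal w \<Longrightarrow> valid m w \<Longrightarrow> Wt w y h \<noteq> (0::'k::field_char_0) \<Longrightarrow> good p n m \<gamma> (wdeg w) (map snd w)"
proof -
  assume nw: "normal w" and vw: "valid m w" and W: "Wt w y h \<noteq> (0::'k)"
  have cz: "count (mset w) (True, i) = 0 \<or> count (mset w) (False, i) = 0" for i
    using nw by (auto simp: normal_def)
  have s1: "set (map snd w) \<subseteq> {1..m}" using vw by (auto simp: valid_def)
  have s2: "\<forall>i\<in>{1..m}. count (mset (map snd w)) i = nat \<bar>wdeg w i\<bar>"
  proof
    fix i
    show "count (mset (map snd w)) i = nat \<bar>wdeg w i\<bar>"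
    proof -
      have a: "count (mset (map snd w)) i = count (mset w) (True, i) + count (mset w) (False, i)"
        by (rule cnt_snd)
      have b: "wdeg w i = int (count (mset w) (True, i)) - int (count (mset w) (False, i))"
        by (rule wdeg_count)
      show ?thesis unfolding a b using cz[of i] by (auto simp del: count_mset_0_iff)
    qed
  qed
  have sg: "map (\<lambda>i. sgn (wdeg w i) * \<gamma> r i) (map snd w) = ent \<gamma> r w" for r
  proof -
    have "sgn (wdeg w (snd l)) * \<gamma> r (snd l) = (if fst l then \<gamma> r (snd l) else - \<gamma> r (snd l))" if l: "l \<in> set w" for l
    proof -
      obtain b i where bi: "l = (b, i)" by (cases l)
      have pos: "count (mset w) (b, i) > 0" using l bi by simp
      show ?thesis
      proof (cases b)
        case True
        then have c0: "count (mset w) (False, i) = 0" using cz[of i] pos by auto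
        have "wdeg w i > 0" unfolding wdeg_count c0 using pos True by simp
        then show ?thesis using bi True by simp
      next
        case False
        then have c0: "count (mset w) (True, i) = 0" using cz[of i] pos by auto
        have "wdeg w i < 0" unfolding wdeg_count c0 using pos False by simp
        then show ?thesis using bi False by simp
      qed
    qed
    then show ?thesis by (simp add: ent_def)
  qed
  have s3: "\<forall>r\<in>{p<..n}. no_bad_block (map (\<lambda>i. sgn (wdeg w i) * \<gamma> r i) (map snd w))"
  proof
    fix r assume r: "r \<in> {p<..n}"
    show "no_bad_block (map (\<lambda>i. sgn (wdeg w i) * \<gamma> r i) (map snd w))"
    proof (cases "w = []")
      case True then show ?thesis by (simp add: no_bad_block_def)
    next
      case False
      have y: "y \<in> V" using Wt_V[OF W False] .
      show ?thesis unfolding sg using okst_nb[OF W1[OF vw y W r]] .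
    qed
  qed
  show ?thesis using s1 s2 s3 by (simp add: good_def)
qed

lemma dir1: "\<not> (\<exists>s. good p n m \<gamma> g s) \<Longrightarrow> Fhom p n m g \<subseteq> (K0 :: 'k::field_char_0 elt set)"
proof
  fix c :: "'k elt" assume ng: "\<not> (\<exists>s. good p n m \<gamma> g s)" and ch: "c \<in> Fhom p n m g"
  obtain d where d: "d \<in> NF g" "eqv c d" using Fhom_NF[OF ch] by blast
  have dF: "d \<in> Fset p n m" using d(1) by (simp add: NF_def)
  have "Phi d f y h = 0" for f y h
  proof -
    have "d w y * Phiw w f y h = 0" if w: "w \<in> supp d" for w
    proof (rule ccontr)
      assume nz: "d w y * Phiw w f y h \<noteq> 0"
      then have W: "Wt w y h \<noteq> 0" by (auto simp: Phiw_def)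
      have dw: "d w \<noteq> (\<lambda>v. 0)" using w by (simp add: supp_def)
      then have nw: "normal w" and wd: "wdeg w = g" using d(1) by (auto simp: NF_def)
      have vw: "valid m w" using dw dF by (auto simp: Fset_def valid_def)
      show False using G1[OF nw vw W] wd ng by auto
    qed
    then show ?thesis unfolding Phi_def by (intro sum.neutral) blast
  qed
  then show "c \<in> K0" using ch Phi_eqv[OF d(2)] by (simp add: K0_def Fhom_def)
qed

lemma dir2:
  assumes gs: "good p n m \<gamma> g s" and g0: "\<forall>i. i \<notin> {1..m} \<longrightarrow> g i = 0"
  shows "\<not> (Fhom p n m g \<subseteq> (Imax p n m \<gamma> :: 'k::field_char_0 elt set))"
proof
  assume sub: "Fhom p n m g \<subseteq> (Imax p n m \<gamma> :: 'k elt set)"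
  have ss: "set s \<subseteq> {1..m}" and cs: "\<forall>i\<in>{1..m}. count (mset s) i = nat \<bar>g i\<bar>"
    and nb: "\<forall>r\<in>{p<..n}. no_bad_block (map (\<lambda>i. sgn (g i) * \<gamma> r i) s)"
    using gs by (auto simp: good_def)
  define w where "w = map (\<lambda>i. (0 < g i, i)) s"
  define ws where "ws = rev (map (\<lambda>l. (\<not> fst l, snd l)) w)"
  have vw: "valid m w" using ss by (auto simp: w_def valid_def)
  have vws: "valid m ws" using ss by (auto simp: ws_def w_def valid_def)
  have gnz: "g i \<noteq> 0" if "i \<in> set s" for i
  proof
    assume g: "g i = 0"
    have "count (mset s) i = nat \<bar>g i\<bar>" using cs ss that by auto
    then have "count (mset s) i = 0" using g by simp
    then show False using that by simp
  qed
  have wd: "wdeg w = g"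
  proof (rule ext)
    fix j
    have cT: "count (mset w) (True, j) = (if (0 < g j) = True then count (mset s) j else 0)"
      unfolding w_def by (rule cnt_map)
    have cF: "count (mset w) (False, j) = (if (0 < g j) = False then count (mset s) j else 0)"
      unfolding w_def by (rule cnt_map)
    show "wdeg w j = g j"
    proof (cases "j \<in> {1..m}")
      case True
      then have "count (mset s) j = nat \<bar>g j\<bar>" using cs by blast
      then show ?thesis unfolding wdeg_count cT cF by auto
    next
      case False
      then have "j \<notin> set s" using ss by auto
      then have "count (mset s) j = 0" by simp
      then show ?thesis unfolding wdeg_count cT cF using g0 False by auto
    qed
  qed
  have mF: "mono w \<in> (Fset p n m :: 'k elt set)" by (rule mono_Fset[OF vw])
  have "mono w \<in> (Fhom p n m g :: 'k elt set)"
    using mF wd by (auto simp: Fhom_def sm_def)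
  then have "mono w \<in> (Imax p n m \<gamma> :: 'k elt set)" using sub by blast
  then obtain K where K: "admissible p n m \<gamma> K" "mono w \<in> (K :: 'k elt set)" by (auto simp: Imax_def)
  have "Fmul p n \<gamma> (mono ws) (mono w) \<in> K"
    using K mono_Fset[OF vws] by (auto simp: admissible_def graded_ideal_def)
  moreover have "Fmul p n \<gamma> (mono ws) (mono w) = (mono (ws @ w) :: 'k elt)"
  proof -
    have "(\<lambda>x. oneR p n x * sig_word p n \<gamma> ws (oneR p n) x) = (oneR p n :: (nat \<Rightarrow> 'k) \<Rightarrow> 'k)"
      by (simp add: sig_word_oneR Rset_mul_oneR Rset_oneR)
    then show ?thesis by (simp add: sm_mul Rset_oneR)
  qed
  ultimately have inK: "mono (ws @ w) \<in> (K :: 'k elt set)" by simp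
  have wd0: "wdeg (ws @ w) = (\<lambda>i. 0)"
    by (simp add: wdeg_append ws_def flip_wdeg)
  have "mono (ws @ w) \<in> (Fhom p n m (\<lambda>i. 0) :: 'k elt set)"
    using mono_Fset[of "ws @ w"] vw vws wd0 by (auto simp: Fhom_def sm_def)
  then have "mono (ws @ w) \<in> (Jgen p n m \<gamma> :: 'k elt set)" using inK K(1) by (auto simp: admissible_def)
  then have Z: "Phi (mono (ws @ w)) f y h = (0::'k)" for f y h using Jgen_prop by blast
  define E where "E = (\<lambda>r. ent \<gamma> r w)"
  have Es: "E r = map (\<lambda>i. sgn (g i) * \<gamma> r i) s" for r
    unfolding E_def ent_def w_def using gnz by (auto simp: sgn_if)
  define y0 :: "nat \<Rightarrow> 'k" where "y0 = (\<lambda>j. if 1 \<le> j \<and> j \<le> p then 1/2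
      else if p < j \<and> j \<le> n then (if fin (fnz (E j) = -1) (E j) then 1 else 0) else 0)"
  have y0V: "y0 \<in> V" using pn by (auto simp: Vset_def y0_def)
  have ev: "\<forall>j. 1 \<le> j \<and> j \<le> p \<longrightarrow> (\<forall>z::int. y0 j \<noteq> of_int z)"
    using half_nonint by (auto simp: y0_def)
  have od: "\<forall>r\<in>{p<..n}. okst (y0 r = 1) (ent \<gamma> r (ws @ w))"
  proof
    fix r assume r: "r \<in> {p<..n}"
    have nbE: "no_bad_block (E r)" using nb r Es by simp
    have vals: "\<forall>e\<in>set (E r). e = 0 \<or> e = 1 \<or> e = -1"
    proof
      fix e assume "e \<in> set (E r)"
      then obtain i where i: "i \<in> set s" "e = sgn (g i) * \<gamma> r i" using Es by auto
      have "i \<in> {1..m}" using i ss by auto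
      then have "\<gamma> r i = 0 \<or> \<gamma> r i = 1 \<or> \<gamma> r i = -1" using gam_bound r by auto
      then show "e = 0 \<or> e = 1 \<or> e = -1" using i by (auto simp: sgn_if)
    qed
    have o1: "okst (fnz (E r) = -1) (E r)" by (rule okst_exists[OF nbE vals])
    from okst_rev[OF o1] have o2: "okst (fin (fnz (E r) = -1) (E r)) (rev (map uminus (E r)))"
      and o3: "fin (fin (fnz (E r) = -1) (E r)) (rev (map uminus (E r))) = (fnz (E r) = -1)" by auto
    have "okst (fin (fnz (E r) = -1) (E r)) (rev (map uminus (E r)) @ E r)"
      using o1 o2 o3 by (simp add: okst_append)
    moreover have "ent \<gamma> r (ws @ w) = rev (map uminus (E r)) @ E r"
    proof -
      have e1: "ent \<gamma> r (ws @ w) = ent \<gamma> r ws @ ent \<gamma> r w" by (simp add: ent_def)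
      have e2: "ent \<gamma> r ws = rev (map uminus (E r))" unfolding ws_def E_def by (rule flip_ent)
      show ?thesis unfolding e1 e2 by (simp add: E_def)
    qed
    moreover have "(y0 r = 1) = fin (fnz (E r) = -1) (E r)" using r by (auto simp: y0_def)
    ultimately show "okst (y0 r = 1) (ent \<gamma> r (ws @ w))" by simp
  qed
  have "Wt (ws @ w) y0 (\<lambda>j. 0) \<noteq> (0::'k)"
    using W3[OF _ y0V ev od] vw vws by simp
  moreover have "Phi (mono (ws @ w)) (\<lambda>y h. 1) y0 (\<lambda>j. 0) = Wt (ws @ w) y0 (\<lambda>j. 0)"
    using y0V by (simp add: Phi_sm Phiw_def oneR_in)
  ultimately show False using Z by simp
qed

end

theorem mainTheorem9:
  fixes p n m :: nat and \<gamma> :: "nat \<Rightarrow> nat \<Rightarrow> int" and g :: "nat \<Rightarrow> int"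
  assumes "alg_closed_type TYPE('k::field_char_0)"
    and "p \<le> n"
    and "gamma_cond_minus p n m \<gamma>"
    and "\<forall>i. i \<notin> {1..m} \<longrightarrow> g i = 0"
  shows "A_comp_nonzero TYPE('k) p n m \<gamma> g \<longleftrightarrow>
    (\<exists>s :: nat list. set s \<subseteq> {1..m} \<and> (\<forall>i\<in>{1..m}. count (mset s) i = nat \<bar>g i\<bar>) \<and>
       (\<forall>r\<in>{p<..n}. no_bad_block (map (\<lambda>i. sgn (g i) * \<gamma> r i) s)))"
proof -
  interpret R: rep p n m \<gamma> using assms(2,3) by unfold_locales
  have "A_comp_nonzero TYPE('k) p n m \<gamma> g \<longleftrightarrow> (\<exists>s. good p n m \<gamma> g s)"
  proof
    assume a: "A_comp_nonzero TYPE('k) p n m \<gamma> g"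
    show "\<exists>s. good p n m \<gamma> g s"
    proof (rule ccontr)
      assume "\<not> (\<exists>s. good p n m \<gamma> g s)"
      then have "Fhom p n m g \<subseteq> (R.K0 :: 'k elt set)" by (rule R.dir1)
      then have "Fhom p n m g \<subseteq> (Imax p n m \<gamma> :: 'k elt set)" using R.K0_Imax by blast
      then show False using a by (simp add: A_comp_nonzero_def)
    qed
  next
    assume "\<exists>s. good p n m \<gamma> g s"
    then obtain s where "good p n m \<gamma> g s" by blast
    from R.dir2[OF this assms(4)]
    show "A_comp_nonzero TYPE('k) p n m \<gamma> g" by (simp add: A_comp_nonzero_def)
  qed
  then show ?thesis by (simp add: good_def)
qed


end
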